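(* Let $\lambda_1>\lambda_2>\dots>\lambda_n$ be integers (a regular dominant integral weight $\lambda$). A vertex $v$ of the Gelfand–Tsetlin polytope $GT_\lambda$ is simplicial if and only if the graph $\Gamma_v$ is acyclic.
   Context: $GT_\lambda$ is the polytope in $\mathbb R^{n(n+1)/2}$, with coordinates $A_{i,j}$ for $0\le i\le n-1$, $1\le j\le n-i$, defined by $A_{0,j}=\lambda_j$ and $A_{i,j}\ge A_{i+1,j}\ge A_{i,j+1}$ for all $0\le i\le n-2$, $1\le j\le n-i-1$. A vertex of a polytope $P$ is simplicial if it lies on exactly $\dim P$ facets. Let $T$ be the graph with node set $\{(i,j):0\le i\le n-1,\ 1\le j\le n-i\}$ in which, for every $1\le i\le n-1$, $1\le j\le n-i$, the node $(i,j)$ is adjacent to $(i-1,j)$ and to $(i-1,j+1)$ (and there are no other edges). For a vertex $v$ of $GT_\lambda$, $\Gamma_v$ is the spanning subgraph of $T$ (containing all nodes of $T$) whose edges are exactly those edges of $T$ whose two endpoints $(i,j),(i',j')$ satisfy $v_{i,j}=v_{i',j'}$. *)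

theory Defs
  imports Complex_Main
begin

text \<open>Points of R^{n(n+1)/2} are functions A :: nat => nat => real, with A i j the
coordinate A_{i,j}; they are required to vanish outside the index set.\<close>

definition gt_idx :: "nat \<Rightarrow> (nat \<times> nat) set" where
  "gt_idx n = {(i, j). i < n \<and> 1 \<le> j \<and> j \<le> n - i}"

definition gt_space :: "nat \<Rightarrow> (nat \<Rightarrow> nat \<Rightarrow> real) set" where
  "gt_space n = {A. \<forall>i j. (i, j) \<notin> gt_idx n \<longrightarrow> A i j = 0}"

definition GT :: "nat \<Rightarrow> (nat \<Rightarrow> int) \<Rightarrow> (nat \<Rightarrow> nat \<Rightarrow> real) set" where
  "GT n lam = {A. A \<in> gt_space n
      \<and> (\<forall>j. 1 \<le> j \<and> j \<le> n \<longrightarrow> A 0 j = real_of_int (lam j))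
      \<and> (\<forall>i j. i + 2 \<le> n \<and> 1 \<le> j \<and> j \<le> n - i - 1 \<longrightarrow>
             A i j \<ge> A (i + 1) j \<and> A (i + 1) j \<ge> A i (j + 1))}"

definition aff_indep_pts :: "(nat \<Rightarrow> nat \<Rightarrow> real) set \<Rightarrow> bool" where
  "aff_indep_pts S \<longleftrightarrow> finite S \<and>
     (\<forall>c. (\<Sum>s\<in>S. c s) = 0 \<and> (\<forall>i j. (\<Sum>s\<in>S. c s * s i j) = 0) \<longrightarrow> (\<forall>s\<in>S. c s = 0))"

definition pdim :: "(nat \<Rightarrow> nat \<Rightarrow> real) set \<Rightarrow> int" where
  "pdim P = (if P = {} then -1
             else int (Max {card S | S. S \<subseteq> P \<and> S \<noteq> {} \<and> aff_indep_pts S}) - 1)"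

definition face_gt :: "nat \<Rightarrow> (nat \<Rightarrow> nat \<Rightarrow> real) set \<Rightarrow> (nat \<Rightarrow> nat \<Rightarrow> real) set \<Rightarrow> bool" where
  "face_gt n P F \<longleftrightarrow> (\<exists>a b. (\<forall>x\<in>P. (\<Sum>(i, j)\<in>gt_idx n. a i j * x i j) \<le> b) \<and>
        F = {x\<in>P. (\<Sum>(i, j)\<in>gt_idx n. a i j * x i j) = b})"

definition facet_gt :: "nat \<Rightarrow> (nat \<Rightarrow> nat \<Rightarrow> real) set \<Rightarrow> (nat \<Rightarrow> nat \<Rightarrow> real) set \<Rightarrow> bool" where
  "facet_gt n P F \<longleftrightarrow> face_gt n P F \<and> pdim F = pdim P - 1"

definition is_vertex :: "(nat \<Rightarrow> nat \<Rightarrow> real) set \<Rightarrow> (nat \<Rightarrow> nat \<Rightarrow> real) \<Rightarrow> bool" where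
  "is_vertex P v \<longleftrightarrow> v \<in> P \<and>
     (\<forall>x\<in>P. \<forall>y\<in>P. \<forall>t::real. 0 < t \<and> t < 1 \<and> v = (\<lambda>i j. (1 - t) * x i j + t * y i j) \<longrightarrow> x = y)"

definition simplicial_vertex :: "nat \<Rightarrow> (nat \<Rightarrow> nat \<Rightarrow> real) set \<Rightarrow> (nat \<Rightarrow> nat \<Rightarrow> real) \<Rightarrow> bool" where
  "simplicial_vertex n P v \<longleftrightarrow> is_vertex P v \<and>
     int (card {F. facet_gt n P F \<and> v \<in> F}) = pdim P"

definition T_edge :: "nat \<Rightarrow> nat \<times> nat \<Rightarrow> nat \<times> nat \<Rightarrow> bool" where
  "T_edge n p q \<longleftrightarrow> p \<in> gt_idx n \<and> q \<in> gt_idx n \<and>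
     ((1 \<le> fst p \<and> (q = (fst p - 1, snd p) \<or> q = (fst p - 1, snd p + 1))) \<or>
      (1 \<le> fst q \<and> (p = (fst q - 1, snd q) \<or> p = (fst q - 1, snd q + 1))))"

definition Gamma_edge :: "nat \<Rightarrow> (nat \<Rightarrow> nat \<Rightarrow> real) \<Rightarrow> nat \<times> nat \<Rightarrow> nat \<times> nat \<Rightarrow> bool" where
  "Gamma_edge n v p q \<longleftrightarrow> T_edge n p q \<and> v (fst p) (snd p) = v (fst q) (snd q)"

definition is_cycle :: "('a \<Rightarrow> 'a \<Rightarrow> bool) \<Rightarrow> 'a set \<Rightarrow> 'a list \<Rightarrow> bool" where
  "is_cycle E V cs \<longleftrightarrow> length cs \<ge> 3 \<and> distinct cs \<and> set cs \<subseteq> V \<and>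
     (\<forall>k < length cs. E (cs ! k) (cs ! ((k + 1) mod length cs)))"

definition acyclic_graph :: "('a \<Rightarrow> 'a \<Rightarrow> bool) \<Rightarrow> 'a set \<Rightarrow> bool" where
  "acyclic_graph E V \<longleftrightarrow> \<not> (\<exists>cs. is_cycle E V cs)"

end

theory Submission
  imports Defs
begin


definition walk :: "('a \<Rightarrow> 'a \<Rightarrow> bool) \<Rightarrow> 'a list \<Rightarrow> 'a \<Rightarrow> 'a \<Rightarrow> bool" where
  "walk E xs u v \<longleftrightarrow> xs \<noteq> [] \<and> hd xs = u \<and> last xs = v \<and> successively E xs"

lemma rtranclp_walk: "E\<^sup>*\<^sup>* u v \<Longrightarrow> \<exists>xs. walk E xs u v"
proof (induction rule: converse_rtranclp_induct)
  case base
  then show ?case by (rule exI[of _ "[v]"]) (simp add: walk_def)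
next
  case (step y z)
  then obtain xs where "walk E xs z v" by blast
  then show ?case using step
    by (intro exI[of _ "y # xs"]) (auto simp: walk_def successively_Cons)
qed

lemma walk_distinct: "walk E xs u v \<Longrightarrow> \<exists>ys. walk E ys u v \<and> distinct ys"
proof (induction "length xs" arbitrary: xs rule: less_induct)
  case less
  show ?case
  proof (cases "distinct xs")
    case True then show ?thesis using less by blast
  next
    case False
    then obtain as bs cs y where xs: "xs = as @ [y] @ bs @ [y] @ cs"
      using not_distinct_decomp by blast
    have "walk E (as @ [y] @ cs) u v" using less(2) unfolding xs walk_def
      by (cases as; cases cs) (auto simp: successively_append_iff successively_Cons hd_append split: if_splits)
    moreover have "length (as @ [y] @ cs) < length xs" using xs by simp
    ultimately show ?thesis using less(1) by blast
  qed
qed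

lemma successively_nth: "successively E xs \<Longrightarrow> Suc k < length xs \<Longrightarrow> E (xs ! k) (xs ! Suc k)"
proof (induction xs arbitrary: k)
  case (Cons x xs)
  then show ?case by (cases k; cases xs) (auto simp: successively_Cons)
qed auto

context
  fixes E :: "'a \<Rightarrow> 'a \<Rightarrow> bool" and V R :: "'a set"
  assumes finV: "finite V" and RV: "R \<subseteq> V"
    and Esym: "\<And>x y. E x y \<Longrightarrow> E y x" and EV: "\<And>x y. E x y \<Longrightarrow> x \<in> V \<and> y \<in> V"
    and Eirr: "\<And>x. \<not> E x x"
    and reach: "\<And>x. x \<in> V \<Longrightarrow> \<exists>r\<in>R. E\<^sup>*\<^sup>* x r"
    and sep: "\<And>r r'. r \<in> R \<Longrightarrow> r' \<in> R \<Longrightarrow> E\<^sup>*\<^sup>* r r' \<Longrightarrow> r = r'"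
begin

definition dd :: "'a \<Rightarrow> nat" where "dd x = (LEAST k. \<exists>r\<in>R. (E ^^ k) x r)"

lemma dd_ex: "x \<in> V \<Longrightarrow> \<exists>r\<in>R. (E ^^ dd x) x r"
proof -
  assume x: "x \<in> V"
  obtain r where r: "r \<in> R" "E\<^sup>*\<^sup>* x r" using reach[OF x] by blast
  obtain k where "(E ^^ k) x r" using rtranclp_imp_relpowp[OF r(2)] by blast
  then have "\<exists>k. \<exists>r\<in>R. (E ^^ k) x r" using r by blast
  then show ?thesis unfolding dd_def by (rule LeastI_ex)
qed

lemma dd_le: "(E ^^ k) x r \<Longrightarrow> r \<in> R \<Longrightarrow> dd x \<le> k"
  unfolding dd_def by (rule Least_le) (rule bexI)

lemma dd_0: "x \<in> V \<Longrightarrow> dd x = 0 \<longleftrightarrow> x \<in> R"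
proof
  assume "x \<in> V" "dd x = 0"
  then obtain r where "r \<in> R" "(E ^^ 0) x r" using dd_ex by metis
  then show "x \<in> R" by simp
next
  assume "x \<in> R" then show "dd x = 0" using dd_le[of 0 x x] by simp
qed

lemma dd_edge: "E x y \<Longrightarrow> dd x \<le> Suc (dd y)"
proof -
  assume e: "E x y"
  then have "y \<in> V" using EV by blast
  then obtain r where "r \<in> R" "(E ^^ dd y) y r" using dd_ex by blast
  then have "(E ^^ Suc (dd y)) x r" using e by (meson relpowp_Suc_I2)
  then show ?thesis using dd_le \<open>r \<in> R\<close> by blast
qed

lemma par_ex: "x \<in> V - R \<Longrightarrow> \<exists>y. E x y \<and> Suc (dd y) = dd x"
proof -
  assume x: "x \<in> V - R"
  then obtain r where r: "r \<in> R" "(E ^^ dd x) x r" using dd_ex by blast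
  have "dd x \<noteq> 0" using x dd_0 by blast
  then obtain m where m: "dd x = Suc m" using not0_implies_Suc by blast
  then obtain y where y: "E x y" "(E ^^ m) y r" using r relpowp_Suc_D2 by metis
  have "dd y \<le> m" using dd_le y r by blast
  moreover have "dd x \<le> Suc (dd y)" using dd_edge y by blast
  ultimately show ?thesis using y m by (intro exI[of _ y]) simp
qed

definition par :: "'a \<Rightarrow> 'a" where "par x = (SOME y. E x y \<and> Suc (dd y) = dd x)"

lemma par: "x \<in> V - R \<Longrightarrow> E x (par x) \<and> Suc (dd (par x)) = dd x"
  unfolding par_def using par_ex by (rule someI_ex)

definition Edges where "Edges = {{x, y} | x y. E x y}"
definition PE where "PE = (\<lambda>x. {x, par x}) ` (V - R)"

lemma PE_sub: "PE \<subseteq> Edges"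
proof
  fix e assume "e \<in> PE"
  then obtain x where x: "x \<in> V - R" "e = {x, par x}" unfolding PE_def by blast
  then have "E x (par x)" using par by blast
  then show "e \<in> Edges" unfolding Edges_def using x(2) by blast
qed

lemma finite_Edges: "finite Edges"
proof -
  have "Edges \<subseteq> Pow V" unfolding Edges_def using EV by blast
  then show ?thesis using finV by (meson finite_Pow_iff finite_subset)
qed

lemma inj_PE: "inj_on (\<lambda>x. {x, par x}) (V - R)"
proof (rule inj_onI)
  fix x y assume x: "x \<in> V - R" and y: "y \<in> V - R" and eq: "{x, par x} = {y, par y}"
  show "x = y"
  proof (rule ccontr)
    assume "x \<noteq> y"
    then have "x = par y" "y = par x" using eq by (auto simp: doubleton_eq_iff)
    then show False using par[OF x] par[OF y] by simp
  qed
qed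

lemma card_PE: "card PE = card V - card R"
proof -
  have "card PE = card (V - R)" unfolding PE_def using inj_PE by (simp add: card_image)
  also have "\<dots> = card V - card R" using finV RV by (meson card_Diff_subset finite_subset)
  finally show ?thesis .
qed

lemma card_ge: "card V - card R \<le> card Edges"
proof -
  have "card PE \<le> card Edges" by (rule card_mono[OF finite_Edges PE_sub])
  then show ?thesis using card_PE by simp
qed

lemma edge_par: assumes "E x y" "dd y \<le> dd x" "{x, y} \<in> PE" shows "x \<in> V - R \<and> par x = y"
proof -
  obtain z where z: "z \<in> V - R" "{x, y} = {z, par z}" using assms(3) unfolding PE_def by blast
  have xy: "x \<noteq> y" using assms(1) Eirr by metis
  show ?thesis
  proof (cases "z = x")
    case True then show ?thesis using z xy by (auto simp: doubleton_eq_iff)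
  next
    case False
    then have "z = y" "par z = x" using z xy by (auto simp: doubleton_eq_iff)
    then show ?thesis using par[OF z(1)] assms(2) by simp
  qed
qed

lemma cycle_strict: assumes cyc: "is_cycle E V cs" shows "PE \<noteq> Edges"
proof
  assume PEE: "PE = Edges"
  define L where "L = length cs"
  have L3: "L \<ge> 3" and dist: "distinct cs" and ed: "\<And>k. k < L \<Longrightarrow> E (cs ! k) (cs ! ((k + 1) mod L))"
    using cyc unfolding is_cycle_def L_def by auto
  have "cs \<noteq> []" using L3 L_def by auto
  define M where "M = Max (dd ` set cs)"
  have "M \<in> dd ` set cs" unfolding M_def using \<open>cs \<noteq> []\<close> by (intro Max_in) auto
  then obtain m where m: "m < L" "dd (cs ! m) = M" unfolding L_def by (auto simp: in_set_conv_nth)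
  have mx: "dd (cs ! k) \<le> dd (cs ! m)" if "k < L" for k
  proof -
    have "dd (cs ! k) \<le> M" unfolding M_def using that unfolding L_def by (intro Max_ge) auto
    then show ?thesis using m by simp
  qed
  define k where "k = (if m = 0 then L - 1 else m - 1)"
  have k: "k < L" "(k + 1) mod L = m" using m L3 unfolding k_def by auto
  have a: "(m + 1) mod L < L" using L3 by simp
  have "(m + 1) mod L \<noteq> k"
  proof (cases "m = 0")
    case True then show ?thesis using L3 unfolding k_def by simp
  next
    case False
    show ?thesis
    proof (cases "m + 1 = L")
      case True then show ?thesis using False L3 unfolding k_def by simp
    next
      case False2: False
      then have "(m + 1) mod L = m + 1" using m by simp
      then show ?thesis using False unfolding k_def by simp
    qed
  qed
  then have neq: "cs ! ((m + 1) mod L) \<noteq> cs ! k" using dist a k unfolding L_def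
    by (simp add: nth_eq_iff_index_eq)
  have e1: "E (cs ! m) (cs ! ((m + 1) mod L))" using ed m by blast
  have e2: "E (cs ! m) (cs ! k)" using ed[OF k(1)] k(2) Esym by metis
  have p1: "par (cs ! m) = cs ! ((m + 1) mod L)"
    using edge_par[OF e1] mx[OF a] PEE e1 unfolding Edges_def by blast
  have p2: "par (cs ! m) = cs ! k"
    using edge_par[OF e2] mx[OF k(1)] PEE e2 unfolding Edges_def by blast
  show False using p1 p2 neq by simp
qed

lemma down: fixes P' assumes P'def: "P' = (\<lambda>x y. (x \<in> V - R \<and> y = par x) \<or> (y \<in> V - R \<and> x = par y))"
  shows "x \<in> V \<Longrightarrow> \<exists>r\<in>R. P'\<^sup>*\<^sup>* x r"
proof (induction "dd x" arbitrary: x rule: less_induct)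
  case less
  show ?case
  proof (cases "x \<in> R")
    case True then show ?thesis by blast
  next
    case False
    then have x: "x \<in> V - R" using less(2) by blast
    have p: "E x (par x)" "Suc (dd (par x)) = dd x" using par[OF x] by auto
    have "par x \<in> V" using EV[OF p(1)] by blast
    then obtain r where r: "r \<in> R" "P'\<^sup>*\<^sup>* (par x) r" using less(1)[of "par x"] p(2) by auto
    have "P' x (par x)" unfolding P'def using x by blast
    then have "P'\<^sup>*\<^sup>* x r" using r(2) by (rule converse_rtranclp_into_rtranclp)
    then show ?thesis using r(1) by blast
  qed
qed

lemma rtranclp_sym: assumes "\<And>x y. Q x y \<Longrightarrow> Q y x" "Q\<^sup>*\<^sup>* a b" shows "Q\<^sup>*\<^sup>* b a"
  using assms(2)
proof (induction rule: rtranclp_induct)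
  case base then show ?case by simp
next
  case (step y z)
  have "Q z y" using assms(1) step(2) by blast
  then show ?case using step(3) by (rule converse_rtranclp_into_rtranclp)
qed

lemma acyc_eq: assumes acyc: "\<not> (\<exists>cs. is_cycle E V cs)" shows "Edges \<subseteq> PE"
proof
  fix e assume "e \<in> Edges"
  then obtain u v where e: "e = {u, v}" "E u v" unfolding Edges_def by blast
  show "e \<in> PE"
  proof (rule ccontr)
    assume nPE: "e \<notin> PE"
    define E' where "E' = (\<lambda>x y. E x y \<and> {x, y} \<noteq> {u, v})"
    define P' where "P' = (\<lambda>x y. (x \<in> V - R \<and> y = par x) \<or> (y \<in> V - R \<and> x = par y))"
    have P'E': "P' x y \<Longrightarrow> E' x y" for x y
    proof -
      assume h: "P' x y"
      show "E' x y"
      proof (cases "x \<in> V - R \<and> y = par x")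
        case True
        then have "{x, y} \<in> PE" unfolding PE_def by blast
        have "E x y" using True par by blast
        moreover have "{x, y} \<noteq> {u, v}" using \<open>{x, y} \<in> PE\<close> nPE e(1) by metis
        ultimately show ?thesis unfolding E'_def by blast
      next
        case False
        then have h2: "y \<in> V - R" "x = par y" using h unfolding P'_def by auto
        then have "{y, x} \<in> PE" unfolding PE_def by blast
        moreover have "{y, x} = {x, y}" by blast
        ultimately have "{x, y} \<noteq> {u, v}" using nPE e(1) by auto
        moreover have "E x y" using h2 par Esym by blast
        ultimately show ?thesis unfolding E'_def by blast
      qed
    qed
    have P'sym: "P' x y \<Longrightarrow> P' y x" for x y unfolding P'_def by blast
    have uV: "u \<in> V" and vV: "v \<in> V" using EV[OF e(2)] by auto
    obtain r1 where r1: "r1 \<in> R" "P'\<^sup>*\<^sup>* u r1" using down[OF P'_def uV] by blast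
    obtain r2 where r2: "r2 \<in> R" "P'\<^sup>*\<^sup>* v r2" using down[OF P'_def vV] by blast
    have PEi: "\<And>a b. P' a b \<longrightarrow> E a b" using P'E' unfolding E'_def by blast
    have PE'i: "\<And>a b. P' a b \<longrightarrow> E' a b" using P'E' by blast
    note M1 = mono_rtranclp[OF PEi, rule_format]
    note M2 = mono_rtranclp[OF PE'i, rule_format]
    have m1: "E\<^sup>*\<^sup>* r1 u" by (rule M1[OF rtranclp_sym[OF P'sym r1(2)]])
    have m2: "E\<^sup>*\<^sup>* v r2" by (rule M1[OF r2(2)])
    have "E\<^sup>*\<^sup>* r1 v" using m1 e(2) by (rule rtranclp.rtrancl_into_rtrancl)
    then have "E\<^sup>*\<^sup>* r1 r2" using m2 by (rule rtranclp_trans)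
    then have r12: "r1 = r2" by (rule sep[OF r1(1) r2(1)])
    have "P'\<^sup>*\<^sup>* u v" using r1(2) rtranclp_sym[OF P'sym r2(2)] r12 by simp
    then have "E'\<^sup>*\<^sup>* u v" by (rule M2)
    then obtain ys where w: "walk E' ys u v" using rtranclp_walk by metis
    then obtain zs where w2: "walk E' zs u v" "distinct zs" using walk_distinct by metis
    have uv: "u \<noteq> v" using e(2) Eirr by metis
    have nE': "\<not> E' u v" unfolding E'_def by simp
    have zs0: "zs \<noteq> []" "hd zs = u" "last zs = v" "successively E' zs" using w2(1) unfolding walk_def by auto
    have L3: "length zs \<ge> 3"
    proof (rule ccontr)
      assume "\<not> length zs \<ge> 3"
      moreover have "0 < length zs" using zs0(1) by simp
      ultimately have "length zs = 1 \<or> length zs = 2" by linarith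
      then consider "length zs = 1" | "length zs = 2" by blast
      then show False
      proof cases
        case 1 then obtain a where "zs = [a]" by (cases zs) auto
        then show False using zs0 uv by simp
      next
        case 2 then obtain a b where "zs = [a, b]" by (cases zs; cases "tl zs") auto
        then show False using zs0 nE' by simp
      qed
    qed
    define L where "L = length zs"
    have sE: "E (zs ! k) (zs ! Suc k)" if "Suc k < L" for k
      using successively_nth[OF zs0(4)] that unfolding L_def E'_def by blast
    have lastz: "zs ! (L - 1) = v" using zs0 unfolding L_def by (simp add: last_conv_nth)
    have hdz: "zs ! 0 = u" using zs0 by (simp add: hd_conv_nth)
    have cyc: "is_cycle E V zs"
      unfolding is_cycle_def
    proof (intro conjI allI impI)
      show "3 \<le> length zs" by (rule L3)
      show "distinct zs" by (rule w2(2))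
      show "set zs \<subseteq> V"
      proof
        fix a assume "a \<in> set zs"
        then obtain k where k: "k < L" "zs ! k = a" unfolding L_def by (auto simp: in_set_conv_nth)
        show "a \<in> V"
        proof (cases "Suc k < L")
          case True then show ?thesis using sE[OF True] EV k by metis
        next
          case False then have "k = L - 1" using k by simp
          then show ?thesis using k lastz vV by simp
        qed
      qed
      fix k assume k: "k < length zs"
      show "E (zs ! k) (zs ! ((k + 1) mod length zs))"
      proof (cases "Suc k < L")
        case True then show ?thesis using sE[OF True] unfolding L_def by simp
      next
        case False then have "k = L - 1" using k unfolding L_def by simp
        then have "k + 1 = length zs" using k unfolding L_def by simp
        then have "(k + 1) mod length zs = 0" by simp
        then show ?thesis using \<open>k = L - 1\<close> lastz hdz Esym e(2) by simp
      qed
    qed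
    then show False using acyc by blast
  qed
qed

lemma forest_main: "acyclic_graph E V \<longleftrightarrow> card {{x, y} | x y. E x y} = card V - card R"
proof
  assume "acyclic_graph E V"
  then have "Edges \<subseteq> PE" using acyc_eq unfolding acyclic_graph_def by blast
  then have "Edges = PE" using PE_sub by blast
  then show "card {{x, y} | x y. E x y} = card V - card R" using card_PE unfolding Edges_def by simp
next
  assume c: "card {{x, y} | x y. E x y} = card V - card R"
  show "acyclic_graph E V" unfolding acyclic_graph_def
  proof
    assume "\<exists>cs. is_cycle E V cs"
    then have "PE \<noteq> Edges" using cycle_strict by blast
    then have "PE \<subset> Edges" using PE_sub by blast
    then have "card PE < card Edges" using finite_Edges psubset_card_mono by blast
    then show False using c card_PE unfolding Edges_def by simp
  qed
qed

end


lemma lin_dep: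
  fixes w :: "'a \<Rightarrow> 'b \<Rightarrow> real"
  assumes "finite K"
  shows "finite S \<Longrightarrow> card K < card S \<Longrightarrow> \<exists>c. (\<exists>s\<in>S. c s \<noteq> 0) \<and> (\<forall>k\<in>K. (\<Sum>s\<in>S. c s * w s k) = 0)"
  using assms
proof (induction K arbitrary: S w rule: finite_induct)
  case empty
  then have "S \<noteq> {}" by auto
  then obtain s0 where "s0 \<in> S" by blast
  then show ?case by (intro exI[of _ "\<lambda>s. 1"]) auto
next
  case (insert k K)
  show ?case
  proof (cases "\<forall>s\<in>S. w s k = 0")
    case True
    have "card K < card S" using insert by simp
    then obtain c where c: "\<exists>s\<in>S. c s \<noteq> 0" "\<forall>k\<in>K. (\<Sum>s\<in>S. c s * w s k) = 0"
      using insert.IH[OF insert.prems(1)] by blast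
    have "(\<Sum>s\<in>S. c s * w s k) = 0" using True by simp
    then show ?thesis using c by (intro exI[of _ c]) auto
  next
    case False
    then obtain s0 where s0: "s0 \<in> S" "w s0 k \<noteq> 0" by blast
    define S' where "S' = S - {s0}"
    have fS': "finite S'" using insert.prems(1) S'_def by simp
    have cS': "card S' = card S - 1" using s0 insert.prems(1) S'_def by simp
    have "card K < card S'" using insert cS' by simp
    define w' where "w' = (\<lambda>s j. w s j - (w s k / w s0 k) * w s0 j)"
    obtain c' where c': "\<exists>s\<in>S'. c' s \<noteq> 0" "\<forall>j\<in>K. (\<Sum>s\<in>S'. c' s * w' s j) = 0"
      using insert.IH[OF fS' \<open>card K < card S'\<close>] by blast
    define A where "A = (\<Sum>s\<in>S'. c' s * w s k)"
    define c where "c = (\<lambda>s. if s = s0 then - A / w s0 k else c' s)"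
    have sumS: "(\<Sum>s\<in>S. c s * w s j) = c s0 * w s0 j + (\<Sum>s\<in>S'. c' s * w s j)" for j
    proof -
      have "(\<Sum>s\<in>S. c s * w s j) = c s0 * w s0 j + (\<Sum>s\<in>S'. c s * w s j)"
        using s0(1) insert.prems(1) unfolding S'_def by (simp add: sum.remove)
      moreover have "(\<Sum>s\<in>S'. c s * w s j) = (\<Sum>s\<in>S'. c' s * w s j)"
        unfolding c_def S'_def by (intro sum.cong) auto
      ultimately show ?thesis by simp
    qed
    have "\<forall>j\<in>insert k K. (\<Sum>s\<in>S. c s * w s j) = 0"
    proof
      fix j assume j: "j \<in> insert k K"
      show "(\<Sum>s\<in>S. c s * w s j) = 0"
      proof (cases "j = k")
        case True
        have "(\<Sum>s\<in>S. c s * w s j) = c s0 * w s0 j + (\<Sum>s\<in>S'. c' s * w s j)" by (rule sumS)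
        also have "\<dots> = 0" using s0(2) True unfolding c_def A_def by simp
        finally show ?thesis .
      next
        case False
        then have jK: "j \<in> K" using j by simp
        have "(\<Sum>s\<in>S'. c' s * w s j) = (\<Sum>s\<in>S'. c' s * w' s j + (w s0 j / w s0 k) * (c' s * w s k))"
          unfolding w'_def using s0(2) by (intro sum.cong) (auto simp: field_simps)
        also have "\<dots> = (\<Sum>s\<in>S'. c' s * w' s j) + (w s0 j / w s0 k) * A"
          unfolding A_def by (simp add: sum.distrib sum_distrib_left)
        also have "\<dots> = (w s0 j / w s0 k) * A" using c'(2) jK by simp
        finally have eq: "(\<Sum>s\<in>S'. c' s * w s j) = (w s0 j / w s0 k) * A" .
        have "(\<Sum>s\<in>S. c s * w s j) = c s0 * w s0 j + (\<Sum>s\<in>S'. c' s * w s j)" by (rule sumS)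
        also have "\<dots> = 0" unfolding eq c_def using s0(2) by (simp add: field_simps)
        finally show ?thesis .
      qed
    qed
    moreover have "\<exists>s\<in>S. c s \<noteq> 0" using c'(1) unfolding c_def S'_def by auto
    ultimately show ?thesis by blast
  qed
qed

lemma aff_bound:
  assumes ai: "aff_indep_pts S" and fK: "finite K"
    and cover: "\<And>i j. (\<exists>a. \<forall>s\<in>S. s i j = a) \<or> (\<exists>k\<in>K. \<forall>s\<in>S. s i j = s (fst k) (snd k))"
  shows "card S \<le> card K + 1"
proof (rule ccontr)
  assume "\<not> card S \<le> card K + 1"
  then have lt: "card (insert None (Some ` K)) < card S" using fK by (simp add: card_image)
  have fS: "finite S" using ai unfolding aff_indep_pts_def by blast
  define w where "w = (\<lambda>(s :: nat \<Rightarrow> nat \<Rightarrow> real) (k :: (nat \<times> nat) option). case k of None \<Rightarrow> 1 | Some k \<Rightarrow> s (fst k) (snd k))"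
  obtain c where c: "\<exists>s\<in>S. c s \<noteq> 0" "\<forall>k\<in>insert None (Some ` K). (\<Sum>s\<in>S. c s * w s k) = 0"
    using lin_dep[of "insert None (Some ` K)" S w] fK fS lt by blast
  have s0: "(\<Sum>s\<in>S. c s) = 0" using c(2) unfolding w_def by simp
  have sk: "(\<Sum>s\<in>S. c s * s (fst k) (snd k)) = 0" if "k \<in> K" for k
    using c(2) that unfolding w_def by simp
  have "(\<Sum>s\<in>S. c s * s i j) = 0" for i j
  proof -
    from cover[of i j] show ?thesis
    proof
      assume "\<exists>a. \<forall>s\<in>S. s i j = a"
      then obtain a where a: "\<forall>s\<in>S. s i j = a" by blast
      have "(\<Sum>s\<in>S. c s * s i j) = (\<Sum>s\<in>S. c s) * a" using a by (simp add: sum_distrib_right)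
      then show ?thesis using s0 by simp
    next
      assume "\<exists>k\<in>K. \<forall>s\<in>S. s i j = s (fst k) (snd k)"
      then obtain k where k: "k \<in> K" "\<forall>s\<in>S. s i j = s (fst k) (snd k)" by blast
      have "(\<Sum>s\<in>S. c s * s i j) = (\<Sum>s\<in>S. c s * s (fst k) (snd k))" using k(2) by (intro sum.cong) auto
      then show ?thesis using sk[OF k(1)] by simp
    qed
  qed
  then have "\<forall>s\<in>S. c s = 0" using ai s0 unfolding aff_indep_pts_def by blast
  then show False using c(1) by blast
qed

lemma aff_single: "aff_indep_pts {x}"
  unfolding aff_indep_pts_def by simp

lemma aff_perturb:
  fixes y :: "nat \<Rightarrow> nat \<Rightarrow> real" and d :: "nat \<times> nat \<Rightarrow> nat \<Rightarrow> nat \<Rightarrow> real" and \<delta> :: real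
  assumes fK: "finite K"
    and dK: "\<And>k k'. k \<in> K \<Longrightarrow> k' \<in> K \<Longrightarrow> d k (fst k') (snd k') = (if k = k' then 1 else 0)"
    and dn: "\<delta> \<noteq> 0"
    and Pdef: "P = (\<lambda>k i j. y i j + \<delta> * d k i j)"
  shows "aff_indep_pts (insert y (P ` K)) \<and> card (insert y (P ` K)) = card K + 1"
proof -
  have inj: "inj_on P K"
  proof (rule inj_onI)
    fix k k' assume k: "k \<in> K" "k' \<in> K" "P k = P k'"
    then have "P k (fst k) (snd k) = P k' (fst k) (snd k)" by simp
    then have "d k' (fst k) (snd k) = 1" using dK[of k k] k(1) dn unfolding Pdef by simp
    then show "k = k'" using dK[OF k(2) k(1)] by (simp split: if_splits)
  qed
  have ny: "y \<notin> P ` K"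
  proof
    assume "y \<in> P ` K"
    then obtain k where k: "k \<in> K" "y = P k" by blast
    then have "y (fst k) (snd k) = P k (fst k) (snd k)" by simp
    then show False using dK[OF k(1) k(1)] dn unfolding Pdef by simp
  qed
  have card: "card (insert y (P ` K)) = card K + 1"
    using ny inj fK by (simp add: card_image)
  have fin: "finite (insert y (P ` K))" using fK by simp
  have sumS: "(\<Sum>s\<in>insert y (P ` K). f s) = f y + (\<Sum>k\<in>K. f (P k))" for f :: "_ \<Rightarrow> real"
    using ny inj fK by (simp add: sum.reindex)
  have ai: "\<forall>s\<in>insert y (P ` K). c s = 0"
    if c0: "(\<Sum>s\<in>insert y (P ` K). c s) = 0" and c1: "\<forall>i j. (\<Sum>s\<in>insert y (P ` K). c s * s i j) = 0" for c
  proof -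
    have s0: "c y + (\<Sum>k\<in>K. c (P k)) = 0" using c0 sumS[of c] by simp
    have ck: "c (P k0) = 0" if k0: "k0 \<in> K" for k0
    proof -
      define i where "i = fst k0" define j where "j = snd k0"
      have "0 = (\<Sum>s\<in>insert y (P ` K). c s * s i j)" using c1 by simp
      also have "\<dots> = c y * y i j + (\<Sum>k\<in>K. c (P k) * P k i j)" using sumS[of "\<lambda>s. c s * s i j"] by simp
      also have "(\<Sum>k\<in>K. c (P k) * P k i j) = (\<Sum>k\<in>K. c (P k) * y i j + (if k = k0 then \<delta> * c (P k) else 0))"
        unfolding Pdef i_def j_def using dK k0 by (intro sum.cong) (auto simp: algebra_simps)
      also have "\<dots> = (\<Sum>k\<in>K. c (P k)) * y i j + \<delta> * c (P k0)"
        using fK k0 by (simp add: sum.distrib sum_distrib_right sum.delta sum.delta')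
      finally have "0 = (c y + (\<Sum>k\<in>K. c (P k))) * y i j + \<delta> * c (P k0)" by (simp add: algebra_simps)
      then show ?thesis using s0 dn by simp
    qed
    then have "(\<Sum>k\<in>K. c (P k)) = 0" by simp
    then have "c y = 0" using s0 by simp
    then show ?thesis using ck by blast
  qed
  show ?thesis using card fin ai unfolding aff_indep_pts_def by blast
qed

lemma pdim_char:
  assumes bnd: "\<And>S. S \<subseteq> P \<Longrightarrow> aff_indep_pts S \<Longrightarrow> card S \<le> m + 1"
    and ex: "S0 \<subseteq> P" "S0 \<noteq> {}" "aff_indep_pts S0" "card S0 = m + 1"
  shows "pdim P = int m"
proof -
  have P: "P \<noteq> {}" using ex by blast
  define C where "C = {card S | S. S \<subseteq> P \<and> S \<noteq> {} \<and> aff_indep_pts S}"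
  have "C \<subseteq> {..m+1}" unfolding C_def using bnd by auto
  then have fC: "finite C" by (rule finite_subset) simp
  have "m + 1 \<in> C" unfolding C_def using ex(1,2,3) ex(4)[symmetric] by blast
  then have "Max C = m + 1" using fC \<open>C \<subseteq> {..m+1}\<close> by (intro Max_eqI) auto
  then show ?thesis unfolding pdim_def C_def using P by simp
qed

lemma pdim_ge:
  assumes bnd: "\<And>S. S \<subseteq> P \<Longrightarrow> aff_indep_pts S \<Longrightarrow> card S \<le> B"
    and S: "S \<subseteq> P" "S \<noteq> {}" "aff_indep_pts S"
  shows "int (card S) - 1 \<le> pdim P"
proof -
  have P: "P \<noteq> {}" using S by blast
  define C where "C = {card S | S. S \<subseteq> P \<and> S \<noteq> {} \<and> aff_indep_pts S}"
  have "C \<subseteq> {..B}" unfolding C_def using bnd by auto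
  then have fC: "finite C" by (rule finite_subset) simp
  have "card S \<in> C" unfolding C_def using S by blast
  then have "card S \<le> Max C" using fC by simp
  then show ?thesis unfolding pdim_def C_def using P by simp
qed

lemma pdim_attained:
  assumes bnd: "\<And>S. S \<subseteq> P \<Longrightarrow> aff_indep_pts S \<Longrightarrow> card S \<le> B"
    and P: "P \<noteq> {}"
  shows "\<exists>S. S \<subseteq> P \<and> S \<noteq> {} \<and> aff_indep_pts S \<and> pdim P = int (card S) - 1"
proof -
  define C where "C = {card S | S. S \<subseteq> P \<and> S \<noteq> {} \<and> aff_indep_pts S}"
  have "C \<subseteq> {..B}" unfolding C_def using bnd by auto
  then have fC: "finite C" by (rule finite_subset) simp
  obtain x where "x \<in> P" using P by blast
  then have "card {x} \<in> C" unfolding C_def using aff_single by blast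
  then have "C \<noteq> {}" by blast
  then have "Max C \<in> C" using fC by simp
  then obtain S where S: "S \<subseteq> P" "S \<noteq> {}" "aff_indep_pts S" "Max C = card S" unfolding C_def by auto
  then show ?thesis unfolding pdim_def C_def using P by auto
qed

lemma aff_extend:
  fixes a :: "nat \<Rightarrow> nat \<Rightarrow> real"
  assumes ai: "aff_indep_pts S" and onS: "\<forall>s\<in>S. (\<Sum>(i, j)\<in>G. a i j * s i j) = b"
    and z: "(\<Sum>(i, j)\<in>G. a i j * z i j) \<noteq> b" and fG: "finite G"
  shows "aff_indep_pts (insert z S) \<and> z \<notin> S"
proof -
  have fS: "finite S" using ai unfolding aff_indep_pts_def by blast
  have zS: "z \<notin> S" using onS z by blast
  define g where "g = (\<lambda>s :: nat \<Rightarrow> nat \<Rightarrow> real. (\<Sum>p\<in>G. a (fst p) (snd p) * s (fst p) (snd p)))"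
  have gdef: "(\<Sum>(i, j)\<in>G. a i j * s i j) = g s" for s unfolding g_def by (simp add: split_def)
  have "\<forall>s\<in>insert z S. c s = 0"
    if c0: "(\<Sum>s\<in>insert z S. c s) = 0" and c1: "\<forall>i j. (\<Sum>s\<in>insert z S. c s * s i j) = 0" for c
  proof -
    have "(\<Sum>s\<in>insert z S. c s * g s) = (\<Sum>p\<in>G. a (fst p) (snd p) * (\<Sum>s\<in>insert z S. c s * s (fst p) (snd p)))"
      unfolding g_def by (simp add: sum_distrib_left sum_distrib_right sum.swap[of _ G] algebra_simps)
    also have "\<dots> = 0" using c1 by simp
    finally have e1: "(\<Sum>s\<in>insert z S. c s * g s) = 0" .
    have "(\<Sum>s\<in>insert z S. c s * g s) = c z * g z + (\<Sum>s\<in>S. c s * b)"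
      using zS fS onS gdef by simp
    also have "\<dots> = c z * g z + (\<Sum>s\<in>S. c s) * b" by (simp add: sum_distrib_right)
    also have "(\<Sum>s\<in>S. c s) = - c z" using c0 zS fS by simp
    finally have e2: "(\<Sum>s\<in>insert z S. c s * g s) = c z * g z + - c z * b" .
    have "c z * (g z - b) = c z * g z + - c z * b" by (simp add: algebra_simps)
    then have "c z * (g z - b) = 0" using e1 e2 by simp
    moreover have "g z \<noteq> b" using z gdef by simp
    ultimately have cz: "c z = 0" by simp
    have "(\<Sum>s\<in>S. c s) = 0" using c0 zS fS cz by simp
    moreover have "\<forall>i j. (\<Sum>s\<in>S. c s * s i j) = 0" using c1 zS fS cz by simp
    ultimately have "\<forall>s\<in>S. c s = 0" using ai unfolding aff_indep_pts_def by blast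
    then show ?thesis using cz by simp
  qed
  then show ?thesis using fS zS unfolding aff_indep_pts_def by simp
qed


definition ev :: "(nat \<Rightarrow> nat \<Rightarrow> real) \<Rightarrow> nat \<times> nat \<Rightarrow> real" where
  "ev x p = x (fst p) (snd p)"

definition INEQ :: "nat \<Rightarrow> ((nat \<times> nat) \<times> (nat \<times> nat)) set" where
  "INEQ n = {((i, j), (Suc i, j)) | i j. (Suc i, j) \<in> gt_idx n} \<union>
            {((Suc i, j), (i, Suc j)) | i j. (Suc i, j) \<in> gt_idx n}"

lemma gt_idx_iff: "(i, j) \<in> gt_idx n \<longleftrightarrow> i < n \<and> 1 \<le> j \<and> j \<le> n - i"
  unfolding gt_idx_def by simp

lemma GT_alt: "x \<in> GT n lam \<longleftrightarrow> x \<in> gt_space n \<and> (\<forall>j. 1 \<le> j \<and> j \<le> n \<longrightarrow> x 0 j = real_of_int (lam j))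
   \<and> (\<forall>e\<in>INEQ n. ev x (snd e) \<le> ev x (fst e))"
proof -
  have "(\<forall>i j. i + 2 \<le> n \<and> 1 \<le> j \<and> j \<le> n - i - 1 \<longrightarrow> x i j \<ge> x (i + 1) j \<and> x (i + 1) j \<ge> x i (j + 1))
     \<longleftrightarrow> (\<forall>e\<in>INEQ n. ev x (snd e) \<le> ev x (fst e))"
  proof
    assume h: "\<forall>i j. i + 2 \<le> n \<and> 1 \<le> j \<and> j \<le> n - i - 1 \<longrightarrow> x i j \<ge> x (i + 1) j \<and> x (i + 1) j \<ge> x i (j + 1)"
    show "\<forall>e\<in>INEQ n. ev x (snd e) \<le> ev x (fst e)"
    proof
      fix e assume "e \<in> INEQ n"
      then obtain i j where ij: "(Suc i, j) \<in> gt_idx n"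
        and e: "e = ((i, j), (Suc i, j)) \<or> e = ((Suc i, j), (i, Suc j))" unfolding INEQ_def by blast
      have "i + 2 \<le> n \<and> 1 \<le> j \<and> j \<le> n - i - 1" using ij unfolding gt_idx_iff by simp
      then show "ev x (snd e) \<le> ev x (fst e)" using h e unfolding ev_def by auto
    qed
  next
    assume h: "\<forall>e\<in>INEQ n. ev x (snd e) \<le> ev x (fst e)"
    show "\<forall>i j. i + 2 \<le> n \<and> 1 \<le> j \<and> j \<le> n - i - 1 \<longrightarrow> x i j \<ge> x (i + 1) j \<and> x (i + 1) j \<ge> x i (j + 1)"
    proof (intro allI impI)
      fix i j assume a: "i + 2 \<le> n \<and> 1 \<le> j \<and> j \<le> n - i - 1"
      then have "(Suc i, j) \<in> gt_idx n" unfolding gt_idx_iff by simp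
      then have "((i, j), (Suc i, j)) \<in> INEQ n" "((Suc i, j), (i, Suc j)) \<in> INEQ n" unfolding INEQ_def by blast+
      then show "x i j \<ge> x (i + 1) j \<and> x (i + 1) j \<ge> x i (j + 1)" using h unfolding ev_def by fastforce
    qed
  qed
  then show ?thesis unfolding GT_def by blast
qed

lemma INEQ_cases:
  assumes "e \<in> INEQ n"
  obtains (vert) i j where "e = ((i, j), (Suc i, j))" "(Suc i, j) \<in> gt_idx n"
  | (diag) i j where "e = ((Suc i, j), (i, Suc j))" "(Suc i, j) \<in> gt_idx n"
  using assms unfolding INEQ_def by blast

lemma INEQ_idx: "e \<in> INEQ n \<Longrightarrow> fst e \<in> gt_idx n \<and> snd e \<in> gt_idx n \<and> fst e \<noteq> snd e"
  by (erule INEQ_cases) (auto simp: gt_idx_iff)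

lemma INEQ_antisym: "(p, q) \<in> INEQ n \<Longrightarrow> (q, p) \<notin> INEQ n"
  by (auto simp: INEQ_def)

lemma INEQ_up: assumes "1 \<le> a" "(a, b) \<in> gt_idx n"
  shows "((a - 1, b), (a, b)) \<in> INEQ n \<and> ((a, b), (a - 1, b + 1)) \<in> INEQ n"
proof -
  obtain i where i: "a = Suc i" using assms(1) by (cases a) auto
  show ?thesis using assms(2) unfolding i INEQ_def by auto
qed

lemma T_edge_iff: "T_edge n p q \<longleftrightarrow> (p, q) \<in> INEQ n \<or> (q, p) \<in> INEQ n"
proof
  assume h: "T_edge n p q"
  obtain a b where p: "p = (a, b)" by (cases p)
  obtain c d where q: "q = (c, d)" by (cases q)
  have pi: "p \<in> gt_idx n" and qi: "q \<in> gt_idx n" using h unfolding T_edge_def by auto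
  from h consider "1 \<le> fst p \<and> q = (fst p - 1, snd p)" | "1 \<le> fst p \<and> q = (fst p - 1, snd p + 1)"
     | "1 \<le> fst q \<and> p = (fst q - 1, snd q)" | "1 \<le> fst q \<and> p = (fst q - 1, snd q + 1)"
    unfolding T_edge_def by blast
  then show "(p, q) \<in> INEQ n \<or> (q, p) \<in> INEQ n"
  proof cases
    case 1 then show ?thesis using INEQ_up[of a b n] pi unfolding p by simp
  next
    case 2 then show ?thesis using INEQ_up[of a b n] pi unfolding p by simp
  next
    case 3 then show ?thesis using INEQ_up[of c d n] qi unfolding q by simp
  next
    case 4 then show ?thesis using INEQ_up[of c d n] qi unfolding q by simp
  qed
next
  assume "(p, q) \<in> INEQ n \<or> (q, p) \<in> INEQ n"
  then show "T_edge n p q"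
    unfolding T_edge_def using INEQ_idx[of "(p,q)" n] INEQ_idx[of "(q,p)" n]
    by (auto simp: INEQ_def)
qed

lemma finite_gt_idx: "finite (gt_idx n)"
proof -
  have "gt_idx n \<subseteq> {..<n} \<times> {..n}" unfolding gt_idx_def by auto
  then show ?thesis by (rule finite_subset) simp
qed

lemma finite_INEQ: "finite (INEQ n)"
proof -
  have "INEQ n \<subseteq> gt_idx n \<times> gt_idx n" using INEQ_idx by force
  then show ?thesis using finite_gt_idx by (meson finite_SigmaI finite_subset)
qed

definition upd :: "(nat \<Rightarrow> nat \<Rightarrow> real) \<Rightarrow> nat \<times> nat \<Rightarrow> real \<Rightarrow> nat \<Rightarrow> nat \<Rightarrow> real" where
  "upd y m c = (\<lambda>a b. if (a, b) = m then c else y a b)"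

context
  fixes n :: nat and lam :: "nat \<Rightarrow> int"
  assumes regular: "\<forall>j. 1 \<le> j \<and> j < n \<longrightarrow> lam j > lam (j + 1)"
begin

lemma lamstep: "1 \<le> j \<Longrightarrow> j < n \<Longrightarrow> real_of_int (lam (Suc j)) + 1 \<le> real_of_int (lam j)"
proof -
  assume "1 \<le> j" "j < n"
  then have "lam (Suc j) < lam j" using regular by simp
  then have "lam (Suc j) + 1 \<le> lam j" by simp
  then show ?thesis by linarith
qed

definition y1 :: "nat \<Rightarrow> nat \<Rightarrow> real" where
  "y1 = (\<lambda>i j. if (i, j) \<in> gt_idx n then real_of_int (lam j) - real i / 4 else 0)"
definition y2 :: "nat \<Rightarrow> nat \<Rightarrow> real" where
  "y2 = (\<lambda>i j. if (i, j) \<in> gt_idx n then real_of_int (lam (i + j)) + real i / 4 else 0)"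
definition pt :: "(nat \<times> nat) \<times> (nat \<times> nat) \<Rightarrow> nat \<Rightarrow> nat \<Rightarrow> real" where
  "pt e = (if fst (fst e) < fst (snd e) then upd y1 (snd e) (ev y1 (fst e)) else upd y2 (fst e) (ev y2 (snd e)))"

lemma INEQ_facts:
  assumes "(Suc a, b) \<in> gt_idx n"
  shows "(a, b) \<in> gt_idx n" "(a, Suc b) \<in> gt_idx n" "1 \<le> b" "b < n" "1 \<le> a + b" "a + b < n"
  using assms by (auto simp: gt_idx_iff)

lemma slack_y1: "e \<in> INEQ n \<Longrightarrow> ev y1 (snd e) + 1/4 \<le> ev y1 (fst e)"
proof (erule INEQ_cases)
  fix a b assume e: "e = ((a, b), (Suc a, b))" and m: "(Suc a, b) \<in> gt_idx n"
  note f = INEQ_facts[OF m]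
  show ?thesis unfolding e ev_def y1_def using m f by (simp add: field_simps)
next
  fix a b assume e: "e = ((Suc a, b), (a, Suc b))" and m: "(Suc a, b) \<in> gt_idx n"
  note f = INEQ_facts[OF m]
  have l: "real_of_int (lam (Suc b)) + 1 \<le> real_of_int (lam b)" using lamstep f by blast
  show ?thesis unfolding e ev_def y1_def using m f l by (simp add: field_simps)
qed

lemma slack_y2: "e \<in> INEQ n \<Longrightarrow> ev y2 (snd e) + 1/4 \<le> ev y2 (fst e)"
proof (erule INEQ_cases)
  fix a b assume e: "e = ((a, b), (Suc a, b))" and m: "(Suc a, b) \<in> gt_idx n"
  note f = INEQ_facts[OF m]
  have l: "real_of_int (lam (Suc (a + b))) + 1 \<le> real_of_int (lam (a + b))" using lamstep f by blast
  show ?thesis unfolding e ev_def y2_def using m f l by (simp add: field_simps)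
next
  fix a b assume e: "e = ((Suc a, b), (a, Suc b))" and m: "(Suc a, b) \<in> gt_idx n"
  note f = INEQ_facts[OF m]
  show ?thesis unfolding e ev_def y2_def using m f by (simp add: field_simps)
qed

lemma slack_pt:
  assumes e: "e \<in> INEQ n" and e': "e' \<in> INEQ n" "e' \<noteq> e"
  shows "ev (pt e) (snd e') + 1/4 \<le> ev (pt e) (fst e')"
  using e'(1)
proof (cases rule: INEQ_cases)
  case (vert a b)
  note f = INEQ_facts[OF vert(2)]
  have l: "real_of_int (lam (Suc (a + b))) + 1 \<le> real_of_int (lam (a + b))" using lamstep f by blast
  from e show ?thesis
  proof (cases rule: INEQ_cases)
    case (vert i j)
    note g = INEQ_facts[OF vert(2)]
    show ?thesis using \<open>e' = _\<close> vert e'(2) f g \<open>(Suc a, b) \<in> gt_idx n\<close>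
      unfolding pt_def upd_def ev_def y1_def by (auto simp: field_simps)
  next
    case (diag i j)
    note g = INEQ_facts[OF diag(2)]
    show ?thesis using \<open>e' = _\<close> diag e'(2) f g l \<open>(Suc a, b) \<in> gt_idx n\<close>
      unfolding pt_def upd_def ev_def y2_def by (auto simp: field_simps)
  qed
next
  case (diag a b)
  note f = INEQ_facts[OF diag(2)]
  have l: "real_of_int (lam (Suc b)) + 1 \<le> real_of_int (lam b)" using lamstep f by blast
  from e show ?thesis
  proof (cases rule: INEQ_cases)
    case (vert i j)
    note g = INEQ_facts[OF vert(2)]
    show ?thesis using \<open>e' = _\<close> vert e'(2) f g l \<open>(Suc a, b) \<in> gt_idx n\<close>
      unfolding pt_def upd_def ev_def y1_def by (auto simp: field_simps)
  next
    case (diag i j)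
    note g = INEQ_facts[OF diag(2)]
    show ?thesis using \<open>e' = _\<close> diag e'(2) f g \<open>(Suc a, b) \<in> gt_idx n\<close>
      unfolding pt_def upd_def ev_def y2_def by (auto simp: field_simps)
  qed
qed


lemma y1_space: "y1 \<in> gt_space n" unfolding y1_def gt_space_def by auto
lemma y2_space: "y2 \<in> gt_space n" unfolding y2_def gt_space_def by auto

lemma top_idx: "1 \<le> j \<Longrightarrow> j \<le> n \<Longrightarrow> (0, j) \<in> gt_idx n"
  by (auto simp: gt_idx_iff)

lemma GT_I:
  assumes "x \<in> gt_space n" "\<And>j. 1 \<le> j \<Longrightarrow> j \<le> n \<Longrightarrow> x 0 j = real_of_int (lam j)"
    "\<And>e. e \<in> INEQ n \<Longrightarrow> ev x (snd e) \<le> ev x (fst e)"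
  shows "x \<in> GT n lam"
  using assms unfolding GT_alt by blast

lemma y1_GT: "y1 \<in> GT n lam"
proof (rule GT_I)
  show "y1 \<in> gt_space n" by (rule y1_space)
  fix j assume "1 \<le> j" "j \<le> n" then show "y1 0 j = real_of_int (lam j)" using top_idx unfolding y1_def by simp
next
  fix e assume "e \<in> INEQ n" then show "ev y1 (snd e) \<le> ev y1 (fst e)" using slack_y1[of e] by linarith
qed

definition mnode :: "(nat \<times> nat) \<times> (nat \<times> nat) \<Rightarrow> nat \<times> nat" where
  "mnode e = (if fst (fst e) < fst (snd e) then snd e else fst e)"
definition onode :: "(nat \<times> nat) \<times> (nat \<times> nat) \<Rightarrow> nat \<times> nat" where
  "onode e = (if fst (fst e) < fst (snd e) then fst e else snd e)"

lemma mnode_facts: assumes "e \<in> INEQ n"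
  shows "mnode e \<in> gt_idx n" "fst (mnode e) \<noteq> 0" "onode e \<in> gt_idx n" "onode e \<noteq> mnode e"
    "{mnode e, onode e} = {fst e, snd e}"
    "pt e = upd (if fst (fst e) < fst (snd e) then y1 else y2) (mnode e)
             (ev (if fst (fst e) < fst (snd e) then y1 else y2) (onode e))"
  using assms
  by (cases rule: INEQ_cases; auto simp: mnode_def onode_def pt_def gt_idx_iff)+

lemma pt_space: "e \<in> INEQ n \<Longrightarrow> pt e \<in> gt_space n"
  using mnode_facts[of e] y1_space y2_space unfolding gt_space_def upd_def
  by (cases "mnode e") auto

lemma pt_top: "e \<in> INEQ n \<Longrightarrow> 1 \<le> j \<Longrightarrow> j \<le> n \<Longrightarrow> pt e 0 j = real_of_int (lam j)"
  using mnode_facts[of e] top_idx[of j] unfolding upd_def y1_def y2_def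
  by (cases "mnode e") auto

lemma pt_tight: "e \<in> INEQ n \<Longrightarrow> ev (pt e) (fst e) = ev (pt e) (snd e)"
  by (erule INEQ_cases) (auto simp: pt_def upd_def ev_def)

lemma pt_GT: "e \<in> INEQ n \<Longrightarrow> pt e \<in> GT n lam"
proof (rule GT_I)
  assume e: "e \<in> INEQ n"
  show "pt e \<in> gt_space n" using pt_space[OF e] .
  fix j assume "1 \<le> j" "j \<le> n" then show "pt e 0 j = real_of_int (lam j)" using pt_top[OF e] by simp
next
  fix e' assume e: "e \<in> INEQ n" and e': "e' \<in> INEQ n"
  show "ev (pt e) (snd e') \<le> ev (pt e) (fst e')"
  proof (cases "e' = e")
    case True then show ?thesis using pt_tight[OF e] by simp
  next
    case False then show ?thesis using slack_pt[OF e e'] by simp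
  qed
qed

lemma perturb_GT:
  assumes y: "y \<in> GT n lam" and z: "z \<in> gt_space n" and top: "\<And>j. z 0 j = y 0 j"
    and close: "\<And>p. \<bar>ev z p - ev y p\<bar> \<le> 1/8"
    and sl: "\<And>e. e \<in> INEQ n \<Longrightarrow> ev y (snd e) + 1/4 \<le> ev y (fst e) \<or> ev z (snd e) \<le> ev z (fst e)"
  shows "z \<in> GT n lam"
proof (rule GT_I)
  show "z \<in> gt_space n" by (rule z)
  fix j assume "1 \<le> j" "j \<le> n" then show "z 0 j = real_of_int (lam j)" using y top unfolding GT_alt by simp
next
  fix e assume e: "e \<in> INEQ n"
  show "ev z (snd e) \<le> ev z (fst e)"
    using sl[OF e] close[of "fst e"] close[of "snd e"] by linarith
qed

definition K0 :: "(nat \<times> nat) set" where "K0 = gt_idx n - {p. fst p = 0}"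
definition d0 :: "nat \<times> nat \<Rightarrow> nat \<Rightarrow> nat \<Rightarrow> real" where "d0 k = (\<lambda>i j. if (i, j) = k then 1 else 0)"

lemma finite_K0: "finite K0" unfolding K0_def using finite_gt_idx by simp

lemma cover_GT:
  assumes "S \<subseteq> GT n lam"
  shows "(\<exists>a. \<forall>s\<in>S. s i j = a) \<or> (\<exists>k\<in>K0. \<forall>s\<in>S. s i j = s (fst k) (snd k))"
proof (cases "(i, j) \<in> gt_idx n")
  case False
  then have "\<forall>s\<in>S. s i j = 0" using assms unfolding GT_def gt_space_def by auto
  then show ?thesis by blast
next
  case True
  show ?thesis
  proof (cases "i = 0")
    case True
    then have "\<forall>s\<in>S. s i j = real_of_int (lam j)" using assms \<open>(i, j) \<in> gt_idx n\<close>
      unfolding GT_def by (auto simp: gt_idx_iff)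
    then show ?thesis by blast
  next
    case False
    then have "(i, j) \<in> K0" using True unfolding K0_def by simp
    then show ?thesis by force
  qed
qed

lemma GT_bound: "S \<subseteq> GT n lam \<Longrightarrow> aff_indep_pts S \<Longrightarrow> card S \<le> card K0 + 1"
  using aff_bound[OF _ finite_K0] cover_GT by blast

lemma pdim_GT: "pdim (GT n lam) = int (card K0)"
proof -
  define P where "P = (\<lambda>k i j. y1 i j + 1/8 * d0 k i j)"
  have A: "aff_indep_pts (insert y1 (P ` K0)) \<and> card (insert y1 (P ` K0)) = card K0 + 1"
    by (rule aff_perturb[OF finite_K0 _ _ P_def]) (auto simp: d0_def)
  have sub: "insert y1 (P ` K0) \<subseteq> GT n lam"
  proof
    fix x assume "x \<in> insert y1 (P ` K0)"
    then consider "x = y1" | k where "k \<in> K0" "x = P k" by blast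
    then show "x \<in> GT n lam"
    proof cases
      case 1 then show ?thesis using y1_GT by simp
    next
      case 2
      have kk: "k \<in> gt_idx n" "fst k \<noteq> 0" using 2 unfolding K0_def by auto
      show ?thesis
      proof (rule perturb_GT[OF y1_GT])
        show "x \<in> gt_space n" using y1_space kk unfolding 2 P_def d0_def gt_space_def by auto
        show "x 0 j = y1 0 j" for j using kk unfolding 2 P_def d0_def by auto
        show "\<bar>ev x p - ev y1 p\<bar> \<le> 1/8" for p unfolding 2 P_def d0_def ev_def by auto
        show "ev y1 (snd e) + 1/4 \<le> ev y1 (fst e) \<or> ev x (snd e) \<le> ev x (fst e)" if "e \<in> INEQ n" for e
          using slack_y1[OF that] by simp
      qed
    qed
  qed
  show ?thesis
    by (rule pdim_char[of _ "card K0" "insert y1 (P ` K0)"]) (use GT_bound A sub in auto)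
qed


definition Fe :: "(nat \<times> nat) \<times> (nat \<times> nat) \<Rightarrow> (nat \<Rightarrow> nat \<Rightarrow> real) set" where
  "Fe e = {x \<in> GT n lam. ev x (fst e) = ev x (snd e)}"

lemma Fe_mo: "e \<in> INEQ n \<Longrightarrow> x \<in> Fe e \<Longrightarrow> ev x (mnode e) = ev x (onode e)"
  using mnode_facts(5)[of e] mnode_facts(4)[of e] unfolding Fe_def
  by (auto simp: doubleton_eq_iff)

lemma cover_Fe:
  assumes e: "e \<in> INEQ n" and S: "S \<subseteq> Fe e"
  shows "(\<exists>a. \<forall>s\<in>S. s i j = a) \<or> (\<exists>k\<in>K0 - {mnode e}. \<forall>s\<in>S. s i j = s (fst k) (snd k))"
proof -
  have SG: "S \<subseteq> GT n lam" using S unfolding Fe_def by auto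
  have gen: "(\<exists>a. \<forall>s\<in>S. s i j = a) \<or> (\<exists>k\<in>K0 - {mnode e}. \<forall>s\<in>S. s i j = s (fst k) (snd k))"
    if ne: "(i, j) \<noteq> mnode e" for i j
  proof (cases "(i, j) \<in> gt_idx n")
    case False
    then have "\<forall>s\<in>S. s i j = 0" using SG unfolding GT_def gt_space_def by auto
    then show ?thesis by blast
  next
    case True
    show ?thesis
    proof (cases "i = 0")
      case True
      then have "\<forall>s\<in>S. s i j = real_of_int (lam j)" using SG \<open>(i, j) \<in> gt_idx n\<close>
        unfolding GT_def by (auto simp: gt_idx_iff)
      then show ?thesis by blast
    next
      case False
      then have "(i, j) \<in> K0 - {mnode e}" using True ne unfolding K0_def by simp
      then show ?thesis by force
    qed
  qed
  show ?thesis
  proof (cases "(i, j) = mnode e")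
    case False then show ?thesis using gen by blast
  next
    case True
    have eq: "\<forall>s\<in>S. s i j = s (fst (onode e)) (snd (onode e))"
      using Fe_mo[OF e] S True unfolding ev_def by (metis fst_conv snd_conv subsetD)
    have "(fst (onode e), snd (onode e)) \<noteq> mnode e" using mnode_facts(4)[OF e] by simp
    from gen[OF this]
    show ?thesis
    proof
      assume "\<exists>a. \<forall>s\<in>S. s (fst (onode e)) (snd (onode e)) = a"
      then obtain a where "\<forall>s\<in>S. s (fst (onode e)) (snd (onode e)) = a" by blast
      then have "\<forall>s\<in>S. s i j = a" using eq by simp
      then show ?thesis by blast
    next
      assume "\<exists>k\<in>K0 - {mnode e}. \<forall>s\<in>S. s (fst (onode e)) (snd (onode e)) = s (fst k) (snd k)"
      then obtain k where "k \<in> K0 - {mnode e}" "\<forall>s\<in>S. s (fst (onode e)) (snd (onode e)) = s (fst k) (snd k)" by blast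
      then have "k \<in> K0 - {mnode e}" "\<forall>s\<in>S. s i j = s (fst k) (snd k)" using eq by (simp, metis)
      then show ?thesis by blast
    qed
  qed
qed

lemma Fe_bound: "e \<in> INEQ n \<Longrightarrow> S \<subseteq> Fe e \<Longrightarrow> aff_indep_pts S \<Longrightarrow> card S \<le> card (K0 - {mnode e}) + 1"
  using aff_bound[of S "K0 - {mnode e}"] finite_K0 cover_Fe by blast

lemma mnode_K0: "e \<in> INEQ n \<Longrightarrow> mnode e \<in> K0"
  using mnode_facts(1,2)[of e] unfolding K0_def by auto

lemma card_K1: "e \<in> INEQ n \<Longrightarrow> card (K0 - {mnode e}) = card K0 - 1"
  using mnode_K0 finite_K0 by simp

lemma K0_pos: "e \<in> INEQ n \<Longrightarrow> card K0 \<ge> 1"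
  using mnode_K0 finite_K0 by (metis One_nat_def Suc_leI card_gt_0_iff empty_iff)

lemma pdim_Fe: assumes e: "e \<in> INEQ n" shows "pdim (Fe e) = int (card K0) - 1"
proof -
  define K1 where "K1 = K0 - {mnode e}"
  define d1 where "d1 = (\<lambda>k i j. d0 k i j + (if k = onode e then d0 (mnode e) i j else 0))"
  define P where "P = (\<lambda>k i j. pt e i j + 1/8 * d1 k i j)"
  have fK1: "finite K1" unfolding K1_def using finite_K0 by simp
  have mo: "mnode e \<in> gt_idx n" "fst (mnode e) \<noteq> 0" "onode e \<noteq> mnode e" "{mnode e, onode e} = {fst e, snd e}"
    using mnode_facts[OF e] by auto
  have A: "aff_indep_pts (insert (pt e) (P ` K1)) \<and> card (insert (pt e) (P ` K1)) = card K1 + 1"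
    by (rule aff_perturb[OF fK1 _ _ P_def]) (auto simp: d1_def d0_def K1_def)
  have d1_end: "d1 k (fst q) (snd q) = (if k = onode e then 1 else 0)" if k: "k \<in> K1" and q: "q \<in> {fst e, snd e}" for k q
  proof -
    have "q = mnode e \<or> q = onode e" using q mo(4) by blast
    then show ?thesis using k mo(3) unfolding d1_def d0_def K1_def by auto
  qed
  have sub: "insert (pt e) (P ` K1) \<subseteq> Fe e"
  proof
    fix x assume "x \<in> insert (pt e) (P ` K1)"
    then consider "x = pt e" | k where "k \<in> K1" "x = P k" by blast
    then show "x \<in> Fe e"
    proof cases
      case 1 then show ?thesis using pt_GT[OF e] pt_tight[OF e] unfolding Fe_def by simp
    next
      case 2
      have kk: "k \<in> gt_idx n" "fst k \<noteq> 0" "k \<noteq> mnode e" using 2 unfolding K1_def K0_def by auto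
      have tight: "ev x (fst e) = ev x (snd e)"
        using pt_tight[OF e] d1_end[OF 2(1), of "fst e"] d1_end[OF 2(1), of "snd e"] unfolding 2 P_def ev_def by simp
      have "x \<in> GT n lam"
      proof (rule perturb_GT[OF pt_GT[OF e]])
        show "x \<in> gt_space n" using pt_space[OF e] kk mo unfolding 2 P_def d1_def d0_def gt_space_def by auto
        show "x 0 j = pt e 0 j" for j using kk mo unfolding 2 P_def d1_def d0_def by (cases k; cases "mnode e") auto
        show "\<bar>ev x p - ev (pt e) p\<bar> \<le> 1/8" for p using kk unfolding 2 P_def d1_def d0_def ev_def by auto
        show "ev (pt e) (snd e') + 1/4 \<le> ev (pt e) (fst e') \<or> ev x (snd e') \<le> ev x (fst e')" if "e' \<in> INEQ n" for e'
        proof (cases "e' = e")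
          case True then show ?thesis using tight by simp
        next
          case False then show ?thesis using slack_pt[OF e that] by simp
        qed
      qed
      then show ?thesis using tight unfolding Fe_def by simp
    qed
  qed
  have "pdim (Fe e) = int (card K1)"
    by (rule pdim_char[of _ "card K1" "insert (pt e) (P ` K1)"]) (use Fe_bound[OF e] A sub K1_def in auto)
  then show ?thesis unfolding K1_def using card_K1[OF e] K0_pos[OF e] by simp
qed

end


definition lin :: "nat \<Rightarrow> (nat \<Rightarrow> nat \<Rightarrow> real) \<Rightarrow> (nat \<Rightarrow> nat \<Rightarrow> real) \<Rightarrow> real" where
  "lin n a x = (\<Sum>(i, j)\<in>gt_idx n. a i j * x i j)"

lemma lin_comb: "lin n a (\<lambda>i j. \<alpha> * u i j + \<beta> * w i j) = \<alpha> * lin n a u + \<beta> * lin n a w"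
  unfolding lin_def by (simp add: split_def sum.distrib sum_distrib_left algebra_simps)

lemma lin_avg: "lin n a (\<lambda>i j. (u i j + (\<Sum>e\<in>I. w e i j)) / c) = (lin n a u + (\<Sum>e\<in>I. lin n a (w e))) / c"
proof -
  have "lin n a (\<lambda>i j. (u i j + (\<Sum>e\<in>I. w e i j)) / c)
     = (\<Sum>p\<in>gt_idx n. (a (fst p) (snd p) * u (fst p) (snd p) + (\<Sum>e\<in>I. a (fst p) (snd p) * w e (fst p) (snd p)))) / c"
    unfolding lin_def by (simp add: split_def sum_divide_distrib sum_distrib_left algebra_simps)
  also have "\<dots> = ((\<Sum>p\<in>gt_idx n. a (fst p) (snd p) * u (fst p) (snd p)) + (\<Sum>p\<in>gt_idx n. \<Sum>e\<in>I. a (fst p) (snd p) * w e (fst p) (snd p))) / c"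
    by (simp add: sum.distrib)
  also have "(\<Sum>p\<in>gt_idx n. \<Sum>e\<in>I. a (fst p) (snd p) * w e (fst p) (snd p)) = (\<Sum>e\<in>I. \<Sum>p\<in>gt_idx n. a (fst p) (snd p) * w e (fst p) (snd p))"
    by (rule sum.swap)
  finally show ?thesis unfolding lin_def by (simp add: split_def)
qed

lemma lin_delta: "p \<in> gt_idx n \<Longrightarrow> q \<in> gt_idx n \<Longrightarrow> p \<noteq> q \<Longrightarrow>
  lin n (\<lambda>i j. (if (i, j) = p then 1 else 0) - (if (i, j) = q then 1 else 0)) x = ev x p - ev x q"
proof -
  assume p: "p \<in> gt_idx n" and q: "q \<in> gt_idx n" and pq: "p \<noteq> q"
  have "lin n (\<lambda>i j. (if (i, j) = p then 1 else 0) - (if (i, j) = q then 1 else 0)) x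
     = (\<Sum>r\<in>gt_idx n. (if r = p then ev x r else 0) - (if r = q then ev x r else 0))"
    unfolding lin_def ev_def by (intro sum.cong) (auto simp: split_def)
  also have "\<dots> = ev x p - ev x q" using p q finite_gt_idx by (simp add: sum_subtractf)
  finally show ?thesis .
qed

context
  fixes n :: nat and lam :: "nat \<Rightarrow> int"
  assumes regular: "\<forall>j. 1 \<le> j \<and> j < n \<longrightarrow> lam j > lam (j + 1)"
begin

lemmas Fe_def' = Fe_def[OF regular]

lemma Fe_face: assumes e: "e \<in> INEQ n" shows "face_gt n (GT n lam) (Fe n lam e)"
proof -
  define a where "a = (\<lambda>i j. (if (i, j) = snd e then 1 else 0) - (if (i, j) = fst e then (1::real) else 0))"
  have l: "lin n a x = ev x (snd e) - ev x (fst e)" for x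
    unfolding a_def using INEQ_idx[OF e] by (intro lin_delta) auto
  have "\<forall>x\<in>GT n lam. lin n a x \<le> 0"
  proof
    fix x assume "x \<in> GT n lam"
    then have "ev x (snd e) \<le> ev x (fst e)" using e GT_alt by blast
    then show "lin n a x \<le> 0" by (simp add: l)
  qed
  moreover have "Fe n lam e = {x \<in> GT n lam. lin n a x = 0}" unfolding Fe_def' l by auto
  ultimately show ?thesis unfolding face_gt_def lin_def by blast
qed

lemma Fe_facet: assumes e: "e \<in> INEQ n" shows "facet_gt n (GT n lam) (Fe n lam e)"
  unfolding facet_gt_def using Fe_face[OF e] pdim_Fe[OF regular e] pdim_GT[OF regular] by simp


lemma GT_ineq: "x \<in> GT n lam \<Longrightarrow> e \<in> INEQ n \<Longrightarrow> ev x (snd e) \<le> ev x (fst e)"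
  using GT_alt by blast

lemma GT_top: "x \<in> GT n lam \<Longrightarrow> 1 \<le> j \<Longrightarrow> j \<le> n \<Longrightarrow> x 0 j = real_of_int (lam j)"
  using GT_alt by blast

lemma GT_zero: "x \<in> GT n lam \<Longrightarrow> (i, j) \<notin> gt_idx n \<Longrightarrow> x i j = 0"
  unfolding GT_def gt_space_def by blast

lemma facet_is_Fe:
  assumes F: "facet_gt n (GT n lam) F" and vF: "v \<in> F"
  shows "\<exists>e\<in>INEQ n. F = Fe n lam e"
proof -
  obtain a b where valid: "\<forall>x\<in>GT n lam. lin n a x \<le> b" and Fd: "F = {x\<in>GT n lam. lin n a x = b}"
    using F unfolding facet_gt_def face_gt_def lin_def by blast
  have pF: "pdim F = int (card (K0 n)) - 1" using F pdim_GT[OF regular] unfolding facet_gt_def by simp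
  have FG: "F \<subseteq> GT n lam" using Fd by blast
  have FneG: "F \<noteq> GT n lam" using pF pdim_GT[OF regular] by auto
  have ex: "\<exists>e\<in>INEQ n. F \<subseteq> Fe n lam e"
  proof (rule ccontr)
    assume nex: "\<not> (\<exists>e\<in>INEQ n. F \<subseteq> Fe n lam e)"
    have "\<forall>e\<in>INEQ n. \<exists>x. x \<in> F \<and> ev x (snd e) < ev x (fst e)"
    proof
      fix e assume e: "e \<in> INEQ n"
      then obtain x where x: "x \<in> F" "x \<notin> Fe n lam e" using nex by blast
      then have "ev x (snd e) \<noteq> ev x (fst e)" using FG unfolding Fe_def' by auto
      moreover have "ev x (snd e) \<le> ev x (fst e)" using GT_ineq FG x(1) e by blast
      ultimately show "\<exists>x. x \<in> F \<and> ev x (snd e) < ev x (fst e)" using x(1) by force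
    qed
    then obtain xe where xe: "\<And>e. e \<in> INEQ n \<Longrightarrow> xe e \<in> F \<and> ev (xe e) (snd e) < ev (xe e) (fst e)"
      by metis
    have xeG: "e \<in> INEQ n \<Longrightarrow> xe e \<in> GT n lam" for e using xe FG by blast
    have vG: "v \<in> GT n lam" using vF FG by blast
    define N where "N = card (INEQ n)"
    have fI: "finite (INEQ n)" by (rule finite_INEQ)
    define y where "y = (\<lambda>i j. (v i j + (\<Sum>e\<in>INEQ n. xe e i j)) / (real N + 1))"
    have evy: "ev y p = (ev v p + (\<Sum>e\<in>INEQ n. ev (xe e) p)) / (real N + 1)" for p
      unfolding y_def ev_def by simp
    have yG: "y \<in> GT n lam"
    proof (rule GT_I[OF regular])
      show "y \<in> gt_space n" unfolding gt_space_def
      proof (intro CollectI allI impI)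
        fix i j assume ij: "(i, j) \<notin> gt_idx n"
        have "\<And>e. e \<in> INEQ n \<Longrightarrow> xe e i j = 0" using GT_zero xeG ij by blast
        then have "(\<Sum>e\<in>INEQ n. xe e i j) = 0" by simp
        then show "y i j = 0" unfolding y_def using GT_zero[OF vG ij] by simp
      qed
      fix j assume j: "1 \<le> j" "j \<le> n"
      have "\<And>e. e \<in> INEQ n \<Longrightarrow> xe e 0 j = real_of_int (lam j)" using GT_top xeG j by blast
      then have "(\<Sum>e\<in>INEQ n. xe e 0 j) = real N * real_of_int (lam j)"
        unfolding N_def by simp
      then show "y 0 j = real_of_int (lam j)" unfolding y_def using GT_top[OF vG j]
        by (simp add: field_simps)
    next
      fix e assume e: "e \<in> INEQ n"
      have "\<And>e'. e' \<in> INEQ n \<Longrightarrow> ev (xe e') (snd e) \<le> ev (xe e') (fst e)" using GT_ineq xeG e by blast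
      then have "(\<Sum>e'\<in>INEQ n. ev (xe e') (snd e)) \<le> (\<Sum>e'\<in>INEQ n. ev (xe e') (fst e))"
        by (intro sum_mono)
      moreover have "ev v (snd e) \<le> ev v (fst e)" using GT_ineq[OF vG e] .
      ultimately show "ev y (snd e) \<le> ev y (fst e)" unfolding evy by (simp add: divide_right_mono)
    qed
    have ylin: "lin n a y = b"
    proof -
      have "lin n a y = (lin n a v + (\<Sum>e\<in>INEQ n. lin n a (xe e))) / (real N + 1)"
        unfolding y_def by (rule lin_avg)
      also have "(\<Sum>e\<in>INEQ n. lin n a (xe e)) = real N * b" using xe Fd unfolding N_def by simp
      also have "lin n a v = b" using vF Fd by simp
      also have "(b + real N * b) / (real N + 1) = b"
        by (metis add.commute mult.commute mult_1 distrib_left nonzero_eq_divide_eq of_nat_Suc of_nat_neq_0)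
      finally show ?thesis .
    qed
    have yslack: "ev y (snd e) < ev y (fst e)" if e: "e \<in> INEQ n" for e
    proof -
      have "\<And>e'. e' \<in> INEQ n \<Longrightarrow> ev (xe e') (snd e) \<le> ev (xe e') (fst e)" using GT_ineq xeG e by blast
      then have "0 < (\<Sum>e'\<in>INEQ n. ev (xe e') (fst e) - ev (xe e') (snd e))"
        using xe[OF e] fI e by (intro sum_pos2[of _ e]) auto
      then have "(\<Sum>e'\<in>INEQ n. ev (xe e') (snd e)) < (\<Sum>e'\<in>INEQ n. ev (xe e') (fst e))"
        by (simp add: sum_subtractf)
      moreover have "ev v (snd e) \<le> ev v (fst e)" using GT_ineq[OF vG e] .
      ultimately show ?thesis unfolding evy by (simp add: divide_strict_right_mono)
    qed
    have "\<forall>x\<in>GT n lam. lin n a x = b"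
    proof
      fix x assume xG: "x \<in> GT n lam"
      define sy where "sy = (\<lambda>e. ev y (fst e) - ev y (snd e))"
      define sx where "sx = (\<lambda>e. ev x (fst e) - ev x (snd e))"
      define t where "t = Min (insert 1 ((\<lambda>e. sy e / (1 + \<bar>sx e\<bar>)) ` INEQ n))"
      have syp: "e \<in> INEQ n \<Longrightarrow> 0 < sy e" for e using yslack unfolding sy_def by simp
      have tpos: "0 < t" unfolding t_def using fI syp
        by (subst Min_gr_iff) (auto intro!: divide_pos_pos)
      have tle: "t * (1 + \<bar>sx e\<bar>) \<le> sy e" if e: "e \<in> INEQ n" for e
      proof -
        have "t \<le> sy e / (1 + \<bar>sx e\<bar>)" unfolding t_def using fI e by (intro Min_le) auto
        then show ?thesis by (simp add: pos_le_divide_eq)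
      qed
      define w where "w = (\<lambda>i j. (1 + t) * y i j + (- t) * x i j)"
      have wG: "w \<in> GT n lam"
      proof (rule GT_I[OF regular])
        show "w \<in> gt_space n" unfolding gt_space_def w_def
          using GT_zero[OF yG] GT_zero[OF xG] by simp
        fix j assume j: "1 \<le> j" "j \<le> n"
        show "w 0 j = real_of_int (lam j)" unfolding w_def using GT_top[OF yG j] GT_top[OF xG j]
          by (simp add: algebra_simps)
      next
        fix e assume e: "e \<in> INEQ n"
        have h1: "t * (1 + \<bar>sx e\<bar>) \<le> sy e" by (rule tle[OF e])
        have h2: "t * sx e \<le> t * \<bar>sx e\<bar>" using tpos by (intro mult_left_mono) auto
        have h3: "0 \<le> t * sy e" using tpos syp[OF e] by simp
        have eq1: "ev w (fst e) - ev w (snd e) = (1 + t) * sy e - t * sx e"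
          unfolding w_def ev_def sy_def sx_def by (simp add: algebra_simps)
        have h1': "t + t * \<bar>sx e\<bar> \<le> sy e" using h1 by (simp add: algebra_simps)
        have eq2: "(1 + t) * sy e - t * sx e = sy e + t * sy e - t * sx e" by (simp add: algebra_simps)
        show "ev w (snd e) \<le> ev w (fst e)" using eq1 eq2 h1' h2 h3 tpos by linarith
      qed
      have "lin n a w = (1 + t) * b + (- t) * lin n a x" unfolding w_def lin_comb ylin ..
      moreover have "lin n a w \<le> b" using valid wG by blast
      ultimately have "t * b \<le> t * lin n a x" by (simp add: algebra_simps)
      then have "b \<le> lin n a x" using tpos by simp
      moreover have "lin n a x \<le> b" using valid xG by blast
      ultimately show "lin n a x = b" by simp
    qed
    then have "F = GT n lam" using Fd by auto
    then show False using FneG by simp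
  qed
  then obtain e where e: "e \<in> INEQ n" "F \<subseteq> Fe n lam e" by blast
  have "F = Fe n lam e"
  proof (rule ccontr)
    assume "F \<noteq> Fe n lam e"
    then obtain z where z: "z \<in> Fe n lam e" "z \<notin> F" using e(2) by blast
    have zG: "z \<in> GT n lam" using z unfolding Fe_def' by simp
    then have zb: "lin n a z \<noteq> b" using z(2) Fd by blast
    have bndF: "\<And>S. S \<subseteq> F \<Longrightarrow> aff_indep_pts S \<Longrightarrow> card S \<le> card (K0 n) + 1"
      using GT_bound[OF regular] FG by blast
    obtain S where S: "S \<subseteq> F" "S \<noteq> {}" "aff_indep_pts S" "pdim F = int (card S) - 1"
      using pdim_attained[OF bndF] vF by blast
    have onS: "\<forall>s\<in>S. (\<Sum>(i, j)\<in>gt_idx n. a i j * s i j) = b" using S(1) Fd unfolding lin_def by blast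
    have ext: "aff_indep_pts (insert z S) \<and> z \<notin> S"
      by (rule aff_extend[OF S(3) onS _ finite_gt_idx]) (use zb in \<open>simp add: lin_def\<close>)
    have fS: "finite S" using S(3) unfolding aff_indep_pts_def by blast
    have sub: "insert z S \<subseteq> Fe n lam e" using S(1) e(2) z(1) by blast
    have "int (card (insert z S)) - 1 \<le> pdim (Fe n lam e)"
      by (rule pdim_ge[OF _ sub _ ext[THEN conjunct1]]) (use Fe_bound[OF regular e(1)] in auto)
    also have "\<dots> = int (card (K0 n)) - 1" by (rule pdim_Fe[OF regular e(1)])
    finally have "card S + 1 \<le> card (K0 n)" using ext fS by simp
    then show False using S(4) pF by simp
  qed
  then show ?thesis using e(1) by blast
qed

end


lemma Gamma_iff: "Gamma_edge n v p q \<longleftrightarrow> ((p, q) \<in> INEQ n \<or> (q, p) \<in> INEQ n) \<and> ev v p = ev v q"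
  unfolding Gamma_edge_def T_edge_iff ev_def by simp

lemma Gamma_sym: "Gamma_edge n v p q \<Longrightarrow> Gamma_edge n v q p"
  unfolding Gamma_iff by auto

lemma Gamma_idx: "Gamma_edge n v p q \<Longrightarrow> p \<in> gt_idx n \<and> q \<in> gt_idx n"
  unfolding Gamma_edge_def T_edge_def by blast

lemma Gamma_irr: "\<not> Gamma_edge n v p p"
  unfolding Gamma_iff using INEQ_idx by fastforce

lemma Gamma_val: "(Gamma_edge n v)\<^sup>*\<^sup>* p q \<Longrightarrow> ev v p = ev v q"
  by (induction rule: rtranclp_induct) (auto simp: Gamma_iff)

lemma Gamma_idx_rt: "(Gamma_edge n v)\<^sup>*\<^sup>* p q \<Longrightarrow> p \<in> gt_idx n \<Longrightarrow> q \<in> gt_idx n"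
  by (induction rule: rtranclp_induct) (auto dest: Gamma_idx)

lemma gamma_edges: "{{x, y} | x y. Gamma_edge n v x y} = (\<lambda>e. {fst e, snd e}) ` {e \<in> INEQ n. ev v (fst e) = ev v (snd e)}"
proof
  show "{{x, y} | x y. Gamma_edge n v x y} \<subseteq> (\<lambda>e. {fst e, snd e}) ` {e \<in> INEQ n. ev v (fst e) = ev v (snd e)}"
  proof
    fix s assume "s \<in> {{x, y} | x y. Gamma_edge n v x y}"
    then obtain x y where s: "s = {x, y}" "Gamma_edge n v x y" by blast
    then have h: "(x, y) \<in> INEQ n \<or> (y, x) \<in> INEQ n" "ev v x = ev v y" unfolding Gamma_iff by auto
    from h(1) show "s \<in> (\<lambda>e. {fst e, snd e}) ` {e \<in> INEQ n. ev v (fst e) = ev v (snd e)}"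
    proof
      assume "(x, y) \<in> INEQ n"
      then show ?thesis using h(2) s(1) by (intro image_eqI[of _ _ "(x, y)"]) auto
    next
      assume "(y, x) \<in> INEQ n"
      then show ?thesis using h(2) s(1) by (intro image_eqI[of _ _ "(y, x)"]) auto
    qed
  qed
next
  show "(\<lambda>e. {fst e, snd e}) ` {e \<in> INEQ n. ev v (fst e) = ev v (snd e)} \<subseteq> {{x, y} | x y. Gamma_edge n v x y}"
  proof
    fix s assume "s \<in> (\<lambda>e. {fst e, snd e}) ` {e \<in> INEQ n. ev v (fst e) = ev v (snd e)}"
    then obtain a b where "(a, b) \<in> INEQ n" "ev v a = ev v b" "s = {a, b}" by auto
    then have "Gamma_edge n v a b" "s = {a, b}" unfolding Gamma_iff by auto
    then show "s \<in> {{x, y} | x y. Gamma_edge n v x y}" by blast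
  qed
qed

lemma inj_pair: "inj_on (\<lambda>e. {fst e, snd e}) (INEQ n)"
proof (rule inj_onI)
  fix e e' assume e: "e \<in> INEQ n" and e': "e' \<in> INEQ n" and eq: "{fst e, snd e} = {fst e', snd e'}"
  obtain a b where ab: "e = (a, b)" by (cases e)
  obtain c d where cd: "e' = (c, d)" by (cases e')
  have "(a = c \<and> b = d) \<or> (a = d \<and> b = c)" using eq unfolding ab cd by (auto simp: doubleton_eq_iff)
  then show "e = e'"
  proof
    assume "a = d \<and> b = c"
    then have "(b, a) \<in> INEQ n" using e' cd by simp
    then show ?thesis using INEQ_antisym e ab by blast
  qed (simp add: ab cd)
qed

lemma card_gamma: "card {{x, y} | x y. Gamma_edge n v x y} = card {e \<in> INEQ n. ev v (fst e) = ev v (snd e)}"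
  unfolding gamma_edges by (rule card_image) (rule inj_on_subset[OF inj_pair], blast)

lemma lam_mono:
  fixes lam :: "nat \<Rightarrow> int" and j j' n :: nat
  assumes regular: "\<forall>j. 1 \<le> j \<and> j < n \<longrightarrow> lam j > lam (j + 1)"
  shows "1 \<le> j \<Longrightarrow> j < j' \<Longrightarrow> j' \<le> n \<Longrightarrow> lam j' < lam j"
proof (induction j' rule: less_induct)
  case (less j')
  show ?case
  proof (cases "j' = Suc j")
    case True then show ?thesis using regular less by simp
  next
    case False
    then obtain k where k: "j' = Suc k" "j < k" using less(3) by (cases j') auto
    then have "lam k < lam j" using less by simp
    moreover have "lam (k + 1) < lam k" using regular k less by simp
    ultimately show ?thesis using k by simp
  qed
qed

context
  fixes n :: nat and lam :: "nat \<Rightarrow> int"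
  assumes regular: "\<forall>j. 1 \<le> j \<and> j < n \<longrightarrow> lam j > lam (j + 1)"
begin

lemmas Fe_def'' = Fe_def[OF regular]

lemma Fe_inj: "inj_on (Fe n lam) (INEQ n)"
proof (rule inj_onI)
  fix e e' assume e: "e \<in> INEQ n" and e': "e' \<in> INEQ n" and eq: "Fe n lam e = Fe n lam e'"
  show "e = e'"
  proof (rule ccontr)
    assume ne: "e \<noteq> e'"
    have "pt n lam e \<in> Fe n lam e" using pt_GT[OF regular e] pt_tight[OF regular e] unfolding Fe_def'' by simp
    then have "pt n lam e \<in> Fe n lam e'" using eq by simp
    then have "ev (pt n lam e) (fst e') = ev (pt n lam e) (snd e')" unfolding Fe_def'' by simp
    moreover have "ev (pt n lam e) (snd e') + 1/4 \<le> ev (pt n lam e) (fst e')"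
      using slack_pt[OF regular e e'] ne by simp
    ultimately show False by simp
  qed
qed

lemma facets_eq:
  assumes vG: "v \<in> GT n lam"
  shows "{F. facet_gt n (GT n lam) F \<and> v \<in> F} = Fe n lam ` {e \<in> INEQ n. ev v (fst e) = ev v (snd e)}"
proof
  show "{F. facet_gt n (GT n lam) F \<and> v \<in> F} \<subseteq> Fe n lam ` {e \<in> INEQ n. ev v (fst e) = ev v (snd e)}"
  proof
    fix F assume "F \<in> {F. facet_gt n (GT n lam) F \<and> v \<in> F}"
    then have F: "facet_gt n (GT n lam) F" "v \<in> F" by auto
    obtain e where e: "e \<in> INEQ n" "F = Fe n lam e" using facet_is_Fe[OF regular F] by blast
    then have "ev v (fst e) = ev v (snd e)" using F(2) unfolding Fe_def'' by simp
    then show "F \<in> Fe n lam ` {e \<in> INEQ n. ev v (fst e) = ev v (snd e)}" using e by blast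
  qed
next
  show "Fe n lam ` {e \<in> INEQ n. ev v (fst e) = ev v (snd e)} \<subseteq> {F. facet_gt n (GT n lam) F \<and> v \<in> F}"
  proof
    fix F assume "F \<in> Fe n lam ` {e \<in> INEQ n. ev v (fst e) = ev v (snd e)}"
    then obtain e where e: "e \<in> INEQ n" "ev v (fst e) = ev v (snd e)" "F = Fe n lam e" by blast
    have "facet_gt n (GT n lam) F" using Fe_facet[OF regular e(1)] e(3) by simp
    moreover have "v \<in> F" using e vG unfolding Fe_def'' by simp
    ultimately show "F \<in> {F. facet_gt n (GT n lam) F \<and> v \<in> F}" by blast
  qed
qed

lemma card_facets:
  assumes vG: "v \<in> GT n lam"
  shows "card {F. facet_gt n (GT n lam) F \<and> v \<in> F} = card {e \<in> INEQ n. ev v (fst e) = ev v (snd e)}"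
  unfolding facets_eq[OF vG] by (rule card_image) (rule inj_on_subset[OF Fe_inj], blast)


definition Rt :: "(nat \<times> nat) set" where "Rt = {p \<in> gt_idx n. fst p = 0}"

lemma reach_vertex:
  assumes vert: "is_vertex (GT n lam) v" and x: "x \<in> gt_idx n"
  shows "\<exists>r\<in>Rt. (Gamma_edge n v)\<^sup>*\<^sup>* x r"
proof (rule ccontr)
  assume nr: "\<not> (\<exists>r\<in>Rt. (Gamma_edge n v)\<^sup>*\<^sup>* x r)"
  have vG: "v \<in> GT n lam" using vert unfolding is_vertex_def by blast
  define C where "C = {p. (Gamma_edge n v)\<^sup>*\<^sup>* x p}"
  have CI: "p \<in> C \<Longrightarrow> p \<in> gt_idx n" for p
  proof -
    assume "p \<in> C"
    then have "(Gamma_edge n v)\<^sup>*\<^sup>* x p" unfolding C_def by simp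
    then show ?thesis using Gamma_idx_rt x by metis
  qed
  have CR: "p \<in> C \<Longrightarrow> fst p \<noteq> 0" for p
  proof
    assume p: "p \<in> C" and f: "fst p = 0"
    then have "p \<in> Rt" using CI unfolding Rt_def by simp
    moreover have "(Gamma_edge n v)\<^sup>*\<^sup>* x p" using p unfolding C_def by simp
    ultimately show False using nr by metis
  qed
  have Ccl: "p \<in> C \<Longrightarrow> Gamma_edge n v p q \<Longrightarrow> q \<in> C" for p q
  proof -
    assume "p \<in> C" "Gamma_edge n v p q"
    then have "(Gamma_edge n v)\<^sup>*\<^sup>* x q" unfolding C_def by (simp add: rtranclp.rtrancl_into_rtrancl)
    then show "q \<in> C" unfolding C_def by simp
  qed
  define G where "G = (\<lambda>e. ev v (fst e) - ev v (snd e)) ` {e \<in> INEQ n. ev v (fst e) \<noteq> ev v (snd e)}"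
  have fG: "finite G" unfolding G_def using finite_INEQ by simp
  have Gpos: "g \<in> G \<Longrightarrow> 0 < g" for g
  proof -
    assume "g \<in> G"
    then obtain e where e: "e \<in> INEQ n" "ev v (fst e) \<noteq> ev v (snd e)" "g = ev v (fst e) - ev v (snd e)"
      unfolding G_def by blast
    have "ev v (snd e) \<le> ev v (fst e)" using GT_ineq[OF regular vG e(1)] .
    then show ?thesis using e by simp
  qed
  define \<epsilon> where "\<epsilon> = Min (insert 2 G) / 2"
  have epos: "0 < \<epsilon>" unfolding \<epsilon>_def using fG Gpos by simp
  have ele: "2 * \<epsilon> \<le> g" if "g \<in> G" for g unfolding \<epsilon>_def using fG that by simp
  define xs where "xs = (\<lambda>(\<sigma>::real) i j. v i j + \<sigma> * (if (i, j) \<in> C then \<epsilon> else 0))"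
  have xsG: "xs \<sigma> \<in> GT n lam" if \<sigma>: "\<sigma> = 1 \<or> \<sigma> = -1" for \<sigma>
  proof (rule GT_I[OF regular])
    show "xs \<sigma> \<in> gt_space n" unfolding gt_space_def xs_def using GT_zero[OF regular vG] CI by auto
    fix j assume j: "1 \<le> j" "j \<le> n"
    have "(0, j) \<notin> C" using CR by force
    then show "xs \<sigma> 0 j = real_of_int (lam j)" unfolding xs_def using GT_top[OF regular vG j] by simp
  next
    fix e assume e: "e \<in> INEQ n"
    have le: "ev v (snd e) \<le> ev v (fst e)" using GT_ineq[OF regular vG e] .
    have "(fst e, snd e) \<in> INEQ n" using e by simp
    then have T: "(fst e, snd e) \<in> INEQ n \<or> (snd e, fst e) \<in> INEQ n" by blast
    show "ev (xs \<sigma>) (snd e) \<le> ev (xs \<sigma>) (fst e)"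
    proof (cases "(fst e \<in> C) = (snd e \<in> C)")
      case True then show ?thesis using le unfolding xs_def ev_def by auto
    next
      case False
      have "ev v (fst e) \<noteq> ev v (snd e)"
      proof
        assume eqv: "ev v (fst e) = ev v (snd e)"
        then have g1: "Gamma_edge n v (fst e) (snd e)" "Gamma_edge n v (snd e) (fst e)"
          using T unfolding Gamma_iff by auto
        then show False using False Ccl by blast
      qed
      then have "ev v (fst e) - ev v (snd e) \<in> G" unfolding G_def using e by blast
      then have "2 * \<epsilon> \<le> ev v (fst e) - ev v (snd e)" by (rule ele)
      then show ?thesis using \<sigma> epos unfolding xs_def ev_def by auto
    qed
  qed
  have vform: "v = (\<lambda>i j. (1 - 1/2) * xs (-1) i j + 1/2 * xs 1 i j)" unfolding xs_def by (simp add: algebra_simps)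
  have H: "\<And>x y t. x \<in> GT n lam \<Longrightarrow> y \<in> GT n lam \<Longrightarrow> 0 < t \<Longrightarrow> t < 1 \<Longrightarrow>
      v = (\<lambda>i j. (1 - t) * x i j + t * y i j) \<Longrightarrow> x = y"
    using vert unfolding is_vertex_def by blast
  have "xs (-1) = xs 1" by (rule H[OF xsG[of "-1"] xsG[of 1] _ _ vform]) auto
  moreover have "x \<in> C" unfolding C_def by simp
  ultimately have "xs (-1) (fst x) (snd x) = xs 1 (fst x) (snd x)" by simp
  then show False using \<open>x \<in> C\<close> epos unfolding xs_def by simp
qed

lemma sep_vertex:
  assumes vG: "v \<in> GT n lam" and r: "r \<in> Rt" "r' \<in> Rt" and g: "(Gamma_edge n v)\<^sup>*\<^sup>* r r'"
  shows "r = r'"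
proof -
  obtain j where j: "r = (0, j)" "1 \<le> j" "j \<le> n" using r(1) unfolding Rt_def by (cases r) (auto simp: gt_idx_iff)
  obtain j' where j': "r' = (0, j')" "1 \<le> j'" "j' \<le> n" using r(2) unfolding Rt_def by (cases r') (auto simp: gt_idx_iff)
  have "ev v r = ev v r'" using Gamma_val[OF g] .
  then have "lam j = lam j'" using GT_top[OF regular vG j(2,3)] GT_top[OF regular vG j'(2,3)] j j' unfolding ev_def by simp
  moreover have "j < j' \<Longrightarrow> lam j' < lam j" using lam_mono[OF regular] j j' by blast
  moreover have "j' < j \<Longrightarrow> lam j < lam j'" using lam_mono[OF regular] j j' by blast
  ultimately have "j = j'" by (cases "j < j'"; cases "j' < j") auto
  then show ?thesis using j j' by simp
qed

end


theorem mainTheorem4: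
  fixes n :: nat and lam :: "nat \<Rightarrow> int" and v :: "nat \<Rightarrow> nat \<Rightarrow> real"
  assumes regular: "\<forall>j. 1 \<le> j \<and> j < n \<longrightarrow> lam j > lam (j + 1)"
    and vert: "is_vertex (GT n lam) v"
  shows "simplicial_vertex n (GT n lam) v \<longleftrightarrow> acyclic_graph (Gamma_edge n v) (gt_idx n)"
proof -
  have vG: "v \<in> GT n lam" using vert unfolding is_vertex_def by blast
  define TI where "TI = {e \<in> INEQ n. ev v (fst e) = ev v (snd e)}"
  have c1: "card {F. facet_gt n (GT n lam) F \<and> v \<in> F} = card TI"
    unfolding TI_def by (rule card_facets[OF regular vG])
  have pd: "pdim (GT n lam) = int (card (K0 n))" by (rule pdim_GT[OF regular])
  have RtV: "Rt n \<subseteq> gt_idx n" unfolding Rt_def[OF regular] by blast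
  have K0eq: "K0 n = gt_idx n - Rt n" unfolding K0_def[OF regular] Rt_def[OF regular] by blast
  have cK: "card (K0 n) = card (gt_idx n) - card (Rt n)"
    unfolding K0eq using RtV finite_gt_idx by (meson card_Diff_subset finite_subset)
  have forest: "acyclic_graph (Gamma_edge n v) (gt_idx n) \<longleftrightarrow>
      card {{x, y} | x y. Gamma_edge n v x y} = card (gt_idx n) - card (Rt n)"
  proof (rule forest_main[where E = "Gamma_edge n v" and V = "gt_idx n" and R = "Rt n"])
    show "finite (gt_idx n)" by (rule finite_gt_idx)
    show "Rt n \<subseteq> gt_idx n" by (rule RtV)
    show "\<And>x y. Gamma_edge n v x y \<Longrightarrow> Gamma_edge n v y x" by (rule Gamma_sym)
    show "\<And>x y. Gamma_edge n v x y \<Longrightarrow> x \<in> gt_idx n \<and> y \<in> gt_idx n" by (rule Gamma_idx)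
    show "\<And>x. \<not> Gamma_edge n v x x" by (rule Gamma_irr)
    show "\<And>x. x \<in> gt_idx n \<Longrightarrow> \<exists>r\<in>Rt n. (Gamma_edge n v)\<^sup>*\<^sup>* x r"
      by (rule reach_vertex[OF regular vert])
    show "\<And>r r'. r \<in> Rt n \<Longrightarrow> r' \<in> Rt n \<Longrightarrow> (Gamma_edge n v)\<^sup>*\<^sup>* r r' \<Longrightarrow> r = r'"
      by (rule sep_vertex[OF regular vG])
  qed
  have cg: "card {{x, y} | x y. Gamma_edge n v x y} = card TI" unfolding TI_def by (rule card_gamma)
  show ?thesis unfolding simplicial_vertex_def forest c1 pd cg cK[symmetric] using vert by simp
qed


end
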